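(* A linear functional $\phi$ on $ba(\mathcal A)$ is norm continuous if and only if there is a uniformly bounded net $(f_\alpha)_{\alpha\in\mathfrak A}$ in $\mathcal S(\mathcal A)$ which is Cauchy in $L^1(\mu)$ for every $\mu\in ba(\mathcal A)$, with $\limsup_\alpha\|f_\alpha\|_\infty=\|\phi\|$, such that $\phi(\mu)=\lim_\alpha\mu(f_\alpha)$ for all $\mu\in ba(\mathcal A)$.
   Context: $\mathcal A$ algebra of subsets of $\Omega$; $ba(\mathcal A)$ the Banach space of bounded finitely additive real set functions with $\|\mu\|=|\mu|(\Omega)$. $\mathcal S(\mathcal A)$ the $\mathcal A$-simple functions with sup norm; $\mu(f)=\int f\,d\mu$. A net $(f_\alpha)$ of simple functions is Cauchy in $L^1(\mu)$ if for every $\varepsilon>0$ there is $\alpha_0$ with $|\mu|(|f_{\alpha_1}-f_{\alpha_2}|)<\varepsilon$ for all $\alpha_1,\alpha_2\ge\alpha_0$. *)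

theory Defs
  imports "HOL-Analysis.Analysis"
begin

definition fin_additive :: "'a set set \<Rightarrow> ('a set \<Rightarrow> real) \<Rightarrow> bool" where
  "fin_additive A \<mu> \<longleftrightarrow>
     (\<forall>E\<in>A. \<forall>F\<in>A. E \<inter> F = {} \<longrightarrow> \<mu> (E \<union> F) = \<mu> E + \<mu> F)"

definition partition_sums :: "'a set set \<Rightarrow> ('a set \<Rightarrow> real) \<Rightarrow> 'a set \<Rightarrow> real set" where
  "partition_sums A \<mu> E =
     {(\<Sum>B\<in>P. \<bar>\<mu> B\<bar>) | P. finite P \<and> P \<subseteq> A \<and> disjoint P \<and> \<Union>P = E}"

definition tot_var :: "'a set set \<Rightarrow> ('a set \<Rightarrow> real) \<Rightarrow> 'a set \<Rightarrow> real" where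
  "tot_var A \<mu> E = Sup (partition_sums A \<mu> E)"

text \<open>ba(A): bounded finitely additive real set functions on A (taken to vanish off A,
  so that elements are determined by their values on A).\<close>
definition ba :: "'a set \<Rightarrow> 'a set set \<Rightarrow> ('a set \<Rightarrow> real) set" where
  "ba \<Omega> A = {\<mu>. fin_additive A \<mu> \<and> (\<forall>E. E \<notin> A \<longrightarrow> \<mu> E = 0)
                 \<and> bdd_above (partition_sums A \<mu> \<Omega>)}"

definition ba_norm :: "'a set \<Rightarrow> 'a set set \<Rightarrow> ('a set \<Rightarrow> real) \<Rightarrow> real" where
  "ba_norm \<Omega> A \<mu> = tot_var A \<mu> \<Omega>"

definition simple_fun :: "'a set \<Rightarrow> 'a set set \<Rightarrow> ('a \<Rightarrow> real) \<Rightarrow> bool" where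
  "simple_fun \<Omega> A f \<longleftrightarrow> finite (f ` \<Omega>) \<and> (\<forall>y. {x\<in>\<Omega>. f x = y} \<in> A)"

definition fa_integral :: "'a set \<Rightarrow> ('a set \<Rightarrow> real) \<Rightarrow> ('a \<Rightarrow> real) \<Rightarrow> real" where
  "fa_integral \<Omega> \<mu> f = (\<Sum>y\<in>f ` \<Omega>. y * \<mu> {x\<in>\<Omega>. f x = y})"

definition sup_norm :: "'a set \<Rightarrow> ('a \<Rightarrow> real) \<Rightarrow> real" where
  "sup_norm \<Omega> f = Sup (insert 0 ((\<lambda>x. \<bar>f x\<bar>) ` \<Omega>))"

definition linear_on_ba :: "'a set \<Rightarrow> 'a set set \<Rightarrow> (('a set \<Rightarrow> real) \<Rightarrow> real) \<Rightarrow> bool" where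
  "linear_on_ba \<Omega> A \<phi> \<longleftrightarrow>
     (\<forall>\<mu>\<in>ba \<Omega> A. \<forall>\<nu>\<in>ba \<Omega> A. \<phi> (\<lambda>E. \<mu> E + \<nu> E) = \<phi> \<mu> + \<phi> \<nu>) \<and>
     (\<forall>\<mu>\<in>ba \<Omega> A. \<forall>c::real. \<phi> (\<lambda>E. c * \<mu> E) = c * \<phi> \<mu>)"

definition norm_continuous_on_ba :: "'a set \<Rightarrow> 'a set set \<Rightarrow> (('a set \<Rightarrow> real) \<Rightarrow> real) \<Rightarrow> bool" where
  "norm_continuous_on_ba \<Omega> A \<phi> \<longleftrightarrow>
     (\<forall>\<mu>\<in>ba \<Omega> A. \<forall>\<epsilon>>0. \<exists>\<delta>>0. \<forall>\<nu>\<in>ba \<Omega> A.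
        ba_norm \<Omega> A (\<lambda>E. \<nu> E - \<mu> E) < \<delta> \<longrightarrow> \<bar>\<phi> \<nu> - \<phi> \<mu>\<bar> < \<epsilon>)"

definition functional_norm :: "'a set \<Rightarrow> 'a set set \<Rightarrow> (('a set \<Rightarrow> real) \<Rightarrow> real) \<Rightarrow> real" where
  "functional_norm \<Omega> A \<phi> = Sup {\<bar>\<phi> \<mu>\<bar> | \<mu>. \<mu> \<in> ba \<Omega> A \<and> ba_norm \<Omega> A \<mu> \<le> 1}"

definition directed_set :: "'i set \<Rightarrow> ('i \<Rightarrow> 'i \<Rightarrow> bool) \<Rightarrow> bool" where
  "directed_set I le \<longleftrightarrow> I \<noteq> {} \<and> (\<forall>a\<in>I. le a a) \<and>
     (\<forall>a\<in>I. \<forall>b\<in>I. \<forall>c\<in>I. le a b \<longrightarrow> le b c \<longrightarrow> le a c) \<and>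
     (\<forall>a\<in>I. \<forall>b\<in>I. \<exists>c\<in>I. le a c \<and> le b c)"

definition net_filter :: "'i set \<Rightarrow> ('i \<Rightarrow> 'i \<Rightarrow> bool) \<Rightarrow> 'i filter" where
  "net_filter I le = (INF a\<in>I. principal {b\<in>I. le a b})"

definition L1_cauchy_net :: "'a set \<Rightarrow> 'a set set \<Rightarrow> ('a set \<Rightarrow> real) \<Rightarrow> 'i set
      \<Rightarrow> ('i \<Rightarrow> 'i \<Rightarrow> bool) \<Rightarrow> ('i \<Rightarrow> 'a \<Rightarrow> real) \<Rightarrow> bool" where
  "L1_cauchy_net \<Omega> A \<mu> I le f \<longleftrightarrow>
     (\<forall>\<epsilon>>0. \<exists>a0\<in>I. \<forall>a1\<in>I. \<forall>a2\<in>I. le a0 a1 \<longrightarrow> le a0 a2 \<longrightarrow>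
        fa_integral \<Omega> (tot_var A \<mu>) (\<lambda>x. \<bar>f a1 x - f a2 x\<bar>) < \<epsilon>)"

definition representing_net :: "'a set \<Rightarrow> 'a set set \<Rightarrow> (('a set \<Rightarrow> real) \<Rightarrow> real)
      \<Rightarrow> 'i set \<Rightarrow> ('i \<Rightarrow> 'i \<Rightarrow> bool) \<Rightarrow> ('i \<Rightarrow> 'a \<Rightarrow> real) \<Rightarrow> bool" where
  "representing_net \<Omega> A \<phi> I le f \<longleftrightarrow>
     directed_set I le \<and>
     (\<forall>a\<in>I. simple_fun \<Omega> A (f a)) \<and>
     (\<exists>M. \<forall>a\<in>I. sup_norm \<Omega> (f a) \<le> M) \<and>
     (\<forall>\<mu>\<in>ba \<Omega> A. L1_cauchy_net \<Omega> A \<mu> I le f) \<and>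
     Limsup (net_filter I le) (\<lambda>a. ereal (sup_norm \<Omega> (f a))) = ereal (functional_norm \<Omega> A \<phi>) \<and>
     (\<forall>\<mu>\<in>ba \<Omega> A. ((\<lambda>a. fa_integral \<Omega> \<mu> (f a)) \<longlongrightarrow> \<phi> \<mu>) (net_filter I le))"

end

theory Submission
  imports Defs
begin

definition part :: "'a set \<Rightarrow> 'a set set \<Rightarrow> 'a set set \<Rightarrow> bool" where
  "part \<Omega> M P \<longleftrightarrow> finite P \<and> P \<subseteq> M \<and> disjoint P \<and> \<Union>P = \<Omega>"
definition cb :: "'a set set \<Rightarrow> ('a \<Rightarrow> real) \<Rightarrow> bool" where
  "cb P f \<longleftrightarrow> (\<forall>D\<in>P. \<forall>x\<in>D. \<forall>y\<in>D. f x = f y)"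
definition rep :: "'a set \<Rightarrow> 'a" where "rep D = (SOME x. x \<in> D)"

lemma rep_in: "D \<noteq> {} \<Longrightarrow> rep D \<in> D"
  unfolding rep_def by (auto intro: someI)

context algebra begin
lemma fa_empty: "fin_additive M \<mu> \<Longrightarrow> \<mu> {} = 0"
  unfolding fin_additive_def using empty_sets by (metis Un_empty_left inf_bot_left add_cancel_right_right)
lemma fa_Union:
  assumes fa: "fin_additive M \<mu>" shows "finite P \<Longrightarrow> P \<subseteq> M \<Longrightarrow> disjoint P \<Longrightarrow> \<mu> (\<Union>P) = (\<Sum>B\<in>P. \<mu> B)"
proof (induction P rule: finite_induct)
  case empty then show ?case using fa_empty[OF fa] by simp
next
  case (insert B P)
  have d: "B \<inter> \<Union>P = {}" using insert.prems(2) insert.hyps(2) unfolding disjoint_def by auto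
  have "\<Union>P \<in> M" using insert finite_Union by auto
  then have "\<mu> (B \<union> \<Union>P) = \<mu> B + \<mu> (\<Union>P)" using fa d insert.prems unfolding fin_additive_def by auto
  moreover have "disjoint P" using insert.prems(2) by (auto simp: disjoint_def)
  ultimately show ?case using insert by simp
qed

lemma part_cover: "part \<Omega> M Q \<Longrightarrow> x \<in> \<Omega> \<Longrightarrow> \<exists>D\<in>Q. x \<in> D"
  unfolding part_def by auto
lemma part_unique: "part \<Omega> M Q \<Longrightarrow> D \<in> Q \<Longrightarrow> D' \<in> Q \<Longrightarrow> x \<in> D \<Longrightarrow> x \<in> D' \<Longrightarrow> D = D'"
  unfolding part_def disjoint_def by blast
lemma part_sub: "part \<Omega> M Q \<Longrightarrow> D \<in> Q \<Longrightarrow> D \<subseteq> \<Omega>"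
  unfolding part_def by auto
lemma part_sets: "part \<Omega> M Q \<Longrightarrow> D \<in> Q \<Longrightarrow> D \<in> M"
  unfolding part_def by auto

lemma cb_val: "part \<Omega> M Q \<Longrightarrow> cb Q f \<Longrightarrow> D \<in> Q \<Longrightarrow> x \<in> D \<Longrightarrow> f x = f (rep D)"
  by (metis cb_def empty_iff rep_in)

lemma int_part:
  assumes fa: "fin_additive M \<mu>" and Q: "part \<Omega> M Q" and c: "cb Q f"
  shows "fa_integral \<Omega> \<mu> f = (\<Sum>D\<in>Q. f (rep D) * \<mu> D)"
proof -
  define Q' where "Q' = Q - {{}}"
  have fQ': "finite Q'" using Q unfolding Q'_def part_def by auto
  have sQ': "Q' \<subseteq> M" "disjoint Q'" using Q unfolding Q'_def part_def disjoint_def by auto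
  have img: "f ` \<Omega> = (\<lambda>D. f (rep D)) ` Q'"
  proof
    show "f ` \<Omega> \<subseteq> (\<lambda>D. f (rep D)) ` Q'"
    proof
      fix y assume "y \<in> f ` \<Omega>"
      then obtain x where x: "x \<in> \<Omega>" "y = f x" by auto
      then obtain D where D: "D \<in> Q" "x \<in> D" using part_cover[OF Q] by blast
      then show "y \<in> (\<lambda>D. f (rep D)) ` Q'" using cb_val[OF Q c D] x unfolding Q'_def by auto
    qed
    show "(\<lambda>D. f (rep D)) ` Q' \<subseteq> f ` \<Omega>"
    proof (rule image_subsetI)
      fix D assume "D \<in> Q'"
      then have D: "D \<in> Q" "D \<noteq> {}" by (auto simp: Q'_def)
      have "rep D \<in> D" by (rule rep_in[OF D(2)])
      then have "rep D \<in> \<Omega>" using part_sub[OF Q D(1)] by auto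
      then show "f (rep D) \<in> f ` \<Omega>" by (rule imageI)
    qed
  qed
  have lev: "{x\<in>\<Omega>. f x = y} = \<Union>{D\<in>Q'. f (rep D) = y}" for y
  proof
    show "{x\<in>\<Omega>. f x = y} \<subseteq> \<Union>{D\<in>Q'. f (rep D) = y}"
    proof
      fix x assume "x \<in> {x\<in>\<Omega>. f x = y}"
      then obtain D where D: "D \<in> Q" "x \<in> D" "f x = y" using part_cover[OF Q] by blast
      then show "x \<in> \<Union>{D\<in>Q'. f (rep D) = y}" using cb_val[OF Q c D(1,2)] unfolding Q'_def by auto
    qed
    show "\<Union>{D\<in>Q'. f (rep D) = y} \<subseteq> {x\<in>\<Omega>. f x = y}"
    proof
      fix x assume "x \<in> \<Union>{D\<in>Q'. f (rep D) = y}"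
      then obtain D where "D \<in> Q" "x \<in> D" "f (rep D) = y" unfolding Q'_def by auto
      then show "x \<in> {x\<in>\<Omega>. f x = y}" using cb_val[OF Q c] part_sub[OF Q] by auto
    qed
  qed
  have mlev: "\<mu> {x\<in>\<Omega>. f x = y} = (\<Sum>D\<in>{D\<in>Q'. f (rep D) = y}. \<mu> D)" for y
    unfolding lev using fQ' sQ' by (intro fa_Union[OF fa]) (auto simp: disjoint_def)
  have "fa_integral \<Omega> \<mu> f = (\<Sum>y\<in>f ` \<Omega>. (\<Sum>D\<in>{D\<in>Q'. f (rep D) = y}. f (rep D) * \<mu> D))"
    unfolding fa_integral_def mlev by (auto simp: sum_distrib_left intro!: sum.cong)
  also have "\<dots> = (\<Sum>D\<in>Q'. f (rep D) * \<mu> D)"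
    using sum.group[OF fQ', of "f ` \<Omega>" "\<lambda>D. f (rep D)" "\<lambda>D. f (rep D) * \<mu> D"] img fQ' by auto
  also have "\<dots> = (\<Sum>D\<in>Q. f (rep D) * \<mu> D)"
    using Q fa_empty[OF fa] unfolding Q'_def part_def
    by (intro sum.mono_neutral_left) auto
  finally show ?thesis .
qed
end

definition meet :: "'a set set \<Rightarrow> 'a set set \<Rightarrow> 'a set set" where
  "meet P Q = (\<lambda>(B,D). B \<inter> D) ` (P \<times> Q)"
definition refines :: "'a set set \<Rightarrow> 'a set set \<Rightarrow> bool" where
  "refines Q P \<longleftrightarrow> (\<forall>D\<in>Q. \<exists>B\<in>P. D \<subseteq> B)"
definition lev :: "'a set \<Rightarrow> ('a \<Rightarrow> real) \<Rightarrow> 'a set set" where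
  "lev \<Omega> f = (\<lambda>y. {x\<in>\<Omega>. f x = y}) ` (f ` \<Omega>)"

lemma cb_refines: "cb P f \<Longrightarrow> refines Q P \<Longrightarrow> cb Q f"
  unfolding cb_def refines_def by (meson subsetD)
lemma refines_trans: "refines R Q \<Longrightarrow> refines Q P \<Longrightarrow> refines R P"
  unfolding refines_def by (meson order_trans)
lemma refines_refl: "refines P P"
  unfolding refines_def by auto
lemma refines_meet1: "refines (meet P Q) P"
  unfolding refines_def meet_def by auto
lemma refines_meet2: "refines (meet P Q) Q"
  unfolding refines_def meet_def by auto
lemma cb_comb: "cb P f \<Longrightarrow> cb P g \<Longrightarrow> cb P (\<lambda>x. F (f x) (g x))"
  unfolding cb_def by metis
lemma cb_comb1: "cb P f \<Longrightarrow> cb P (\<lambda>x. F (f x))"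
  unfolding cb_def by metis
lemma cb_const: "cb P (\<lambda>x. c)"
  unfolding cb_def by simp

context algebra begin

lemma part_meet:
  assumes P: "part \<Omega> M P" and Q: "part \<Omega> M Q" shows "part \<Omega> M (meet P Q)"
  unfolding part_def
proof (intro conjI)
  show "finite (meet P Q)" using P Q unfolding part_def meet_def by auto
  show "meet P Q \<subseteq> M" using P Q unfolding part_def meet_def by (auto intro: Int)
  show "disjoint (meet P Q)"
  proof (rule pairwiseI)
    fix X Y assume X: "X \<in> meet P Q" and Y: "Y \<in> meet P Q" and ne: "X \<noteq> Y"
    obtain B D where BD: "B \<in> P" "D \<in> Q" "X = B \<inter> D" using X unfolding meet_def by auto
    obtain B' D' where BD': "B' \<in> P" "D' \<in> Q" "Y = B' \<inter> D'" using Y unfolding meet_def by auto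
    have "B = B' \<or> B \<inter> B' = {}" using P BD BD' unfolding part_def disjoint_def by auto
    moreover have "D = D' \<or> D \<inter> D' = {}" using Q BD BD' unfolding part_def disjoint_def by auto
    ultimately show "disjnt X Y" using ne BD BD' unfolding disjnt_def by auto
  qed
  show "\<Union>(meet P Q) = \<Omega>"
  proof
    show "\<Union>(meet P Q) \<subseteq> \<Omega>" using P unfolding part_def meet_def by auto
    show "\<Omega> \<subseteq> \<Union>(meet P Q)"
    proof
      fix x assume "x \<in> \<Omega>"
      then obtain B D where "B \<in> P" "D \<in> Q" "x \<in> B" "x \<in> D" using part_cover[OF P] part_cover[OF Q] by metis
      then show "x \<in> \<Union>(meet P Q)" unfolding meet_def by auto
    qed
  qed
qed

lemma part_triv: "part \<Omega> M {\<Omega>}"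
  unfolding part_def using top by auto

lemma part_two: assumes "E \<in> M" shows "part \<Omega> M {E, \<Omega> - E}"
  unfolding part_def disjoint_def using assms sets_into_space by (auto intro: compl_sets)

lemma simple_lev: assumes "simple_fun \<Omega> M f" shows "part \<Omega> M (lev \<Omega> f)" "cb (lev \<Omega> f) f"
proof -
  show "part \<Omega> M (lev \<Omega> f)" using assms unfolding simple_fun_def part_def lev_def disjoint_def by auto
  show "cb (lev \<Omega> f) f" unfolding cb_def lev_def by auto
qed

lemma cb_simple: assumes Q: "part \<Omega> M Q" and c: "cb Q f" shows "simple_fun \<Omega> M f"
  unfolding simple_fun_def
proof (intro conjI allI)
  have "f ` \<Omega> \<subseteq> (\<lambda>D. f (rep D)) ` Q"
  proof
    fix y assume "y \<in> f ` \<Omega>"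
    then obtain x where x: "x \<in> \<Omega>" "y = f x" by auto
    then obtain D where D: "D \<in> Q" "x \<in> D" using part_cover[OF Q] by metis
    then show "y \<in> (\<lambda>D. f (rep D)) ` Q" using cb_val[OF Q c D] x by auto
  qed
  then show "finite (f ` \<Omega>)" using Q unfolding part_def by (meson finite_imageI finite_subset)
  fix y
  have eq: "{x \<in> \<Omega>. f x = y} = \<Union>{D\<in>Q. D \<noteq> {} \<and> f (rep D) = y}"
  proof
    show "{x \<in> \<Omega>. f x = y} \<subseteq> \<Union>{D\<in>Q. D \<noteq> {} \<and> f (rep D) = y}"
    proof
      fix x assume "x \<in> {x \<in> \<Omega>. f x = y}"
      then obtain D where D: "D \<in> Q" "x \<in> D" "f x = y" using part_cover[OF Q] by auto
      then show "x \<in> \<Union>{D\<in>Q. D \<noteq> {} \<and> f (rep D) = y}" using cb_val[OF Q c D(1,2)] by auto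
    qed
    show "\<Union>{D\<in>Q. D \<noteq> {} \<and> f (rep D) = y} \<subseteq> {x \<in> \<Omega>. f x = y}"
    proof
      fix x assume "x \<in> \<Union>{D\<in>Q. D \<noteq> {} \<and> f (rep D) = y}"
      then obtain D where "D \<in> Q" "x \<in> D" "f (rep D) = y" by auto
      then show "x \<in> {x\<in>\<Omega>. f x = y}" using cb_val[OF Q c] part_sub[OF Q] by auto
    qed
  qed
  have "\<Union>{D\<in>Q. D \<noteq> {} \<and> f (rep D) = y} \<in> M"
    using Q unfolding part_def by (intro finite_Union) auto
  then show "{x \<in> \<Omega>. f x = y} \<in> M" unfolding eq .
qed

lemma simple_comb:
  assumes "simple_fun \<Omega> M f" "simple_fun \<Omega> M g"
  shows "simple_fun \<Omega> M (\<lambda>x. F (f x) (g x))"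
proof -
  let ?Q = "meet (lev \<Omega> f) (lev \<Omega> g)"
  have Q: "part \<Omega> M ?Q" using part_meet simple_lev assms by metis
  have "cb ?Q f" "cb ?Q g" using cb_refines simple_lev assms refines_meet1 refines_meet2 by metis+
  then show ?thesis using cb_simple[OF Q] cb_comb by metis
qed

lemma simple_comb1: "simple_fun \<Omega> M f \<Longrightarrow> simple_fun \<Omega> M (\<lambda>x. F (f x))"
  using simple_comb[of f f "\<lambda>a b. F a"] by simp

lemma simple_const: "simple_fun \<Omega> M (\<lambda>x. c)"
  using cb_simple[OF part_triv cb_const] .

lemma cb_ind: assumes Q: "part \<Omega> M Q" and C: "C \<in> Q" shows "cb Q (indicator C)"
  unfolding cb_def
proof (intro ballI)
  fix D x y assume "D \<in> Q" "x \<in> D" "y \<in> D"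
  then show "indicator C x = (indicator C y :: real)"
    using part_unique[OF Q] C by (metis indicator_simps)
qed

lemma simple_ind: assumes "E \<in> M" shows "simple_fun \<Omega> M (indicator E :: 'a \<Rightarrow> real)"
  using cb_simple[OF part_two[OF assms] cb_ind[OF part_two[OF assms]]] by simp

lemma simple_common:
  assumes "simple_fun \<Omega> M f" "simple_fun \<Omega> M g"
  obtains Q where "part \<Omega> M Q" "cb Q f" "cb Q g"
proof -
  let ?Q = "meet (lev \<Omega> f) (lev \<Omega> g)"
  have Q: "part \<Omega> M ?Q" using part_meet simple_lev assms by metis
  have "cb ?Q f" "cb ?Q g" using cb_refines simple_lev assms refines_meet1 refines_meet2 by metis+
  then show ?thesis using Q that by blast
qed

lemma int_cong: "(\<And>x. x \<in> \<Omega> \<Longrightarrow> f x = g x) \<Longrightarrow> fa_integral \<Omega> \<mu> f = fa_integral \<Omega> \<mu> g"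
  unfolding fa_integral_def by (intro sum.cong) (auto intro!: arg_cong[where f=\<mu>])

lemma int_meas_add: "fa_integral \<Omega> (\<lambda>E. \<mu> E + \<nu> E) f = fa_integral \<Omega> \<mu> f + fa_integral \<Omega> \<nu> f"
  unfolding fa_integral_def by (simp add: sum.distrib algebra_simps)
lemma int_meas_diff: "fa_integral \<Omega> (\<lambda>E. \<mu> E - \<nu> E) f = fa_integral \<Omega> \<mu> f - fa_integral \<Omega> \<nu> f"
  unfolding fa_integral_def by (simp add: sum_subtractf algebra_simps)
lemma int_meas_cmul: "fa_integral \<Omega> (\<lambda>E. c * \<mu> E) f = c * fa_integral \<Omega> \<mu> f"
  unfolding fa_integral_def by (simp add: sum_distrib_left algebra_simps)
lemma int_meas_cong: "simple_fun \<Omega> M f \<Longrightarrow> (\<And>E. E \<in> M \<Longrightarrow> \<mu> E = \<nu> E) \<Longrightarrow>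
   fa_integral \<Omega> \<mu> f = fa_integral \<Omega> \<nu> f"
  unfolding fa_integral_def simple_fun_def by (intro sum.cong) auto

lemma int_add:
  assumes fa: "fin_additive M \<mu>" and f: "simple_fun \<Omega> M f" and g: "simple_fun \<Omega> M g"
  shows "fa_integral \<Omega> \<mu> (\<lambda>x. f x + g x) = fa_integral \<Omega> \<mu> f + fa_integral \<Omega> \<mu> g"
proof -
  obtain Q where Q: "part \<Omega> M Q" "cb Q f" "cb Q g" using simple_common[OF f g] by metis
  have "cb Q (\<lambda>x. f x + g x)" using cb_comb Q by metis
  then show ?thesis using int_part[OF fa Q(1)] Q by (simp add: sum.distrib algebra_simps)
qed

lemma int_cmul:
  assumes fa: "fin_additive M \<mu>" and f: "simple_fun \<Omega> M f"
  shows "fa_integral \<Omega> \<mu> (\<lambda>x. c * f x) = c * fa_integral \<Omega> \<mu> f"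
proof -
  have Q: "part \<Omega> M (lev \<Omega> f)" "cb (lev \<Omega> f) f" using simple_lev[OF f] by auto
  have "cb (lev \<Omega> f) (\<lambda>x. c * f x)" using cb_comb1 Q by metis
  then show ?thesis using int_part[OF fa Q(1)] Q by (simp add: sum_distrib_left algebra_simps)
qed

lemma int_diff:
  assumes fa: "fin_additive M \<mu>" and f: "simple_fun \<Omega> M f" and g: "simple_fun \<Omega> M g"
  shows "fa_integral \<Omega> \<mu> (\<lambda>x. f x - g x) = fa_integral \<Omega> \<mu> f - fa_integral \<Omega> \<mu> g"
proof -
  obtain Q where Q: "part \<Omega> M Q" "cb Q f" "cb Q g" using simple_common[OF f g] by metis
  have "cb Q (\<lambda>x. f x - g x)" using cb_comb Q by metis
  then show ?thesis using int_part[OF fa Q(1)] Q by (simp add: sum_subtractf algebra_simps)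
qed

lemma int_mono:
  assumes fa: "fin_additive M \<mu>" and pos: "\<And>E. E \<in> M \<Longrightarrow> 0 \<le> \<mu> E"
    and f: "simple_fun \<Omega> M f" and g: "simple_fun \<Omega> M g" and le: "\<And>x. x \<in> \<Omega> \<Longrightarrow> f x \<le> g x"
  shows "fa_integral \<Omega> \<mu> f \<le> fa_integral \<Omega> \<mu> g"
proof -
  obtain Q where Q: "part \<Omega> M Q" "cb Q f" "cb Q g" using simple_common[OF f g] by metis
  have "f (rep D) * \<mu> D \<le> g (rep D) * \<mu> D" if D: "D \<in> Q" for D
  proof (cases "D = {}")
    case True then show ?thesis using fa_empty[OF fa] by simp
  next
    case False
    have "rep D \<in> D" using rep_in[OF False] .
    then have "rep D \<in> \<Omega>" using part_sub[OF Q(1) D] by auto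
    then show ?thesis using le pos part_sets[OF Q(1) D] by (simp add: mult_right_mono)
  qed
  then show ?thesis using int_part[OF fa Q(1)] Q by (simp add: sum_mono)
qed

lemma int_ind:
  assumes fa: "fin_additive M \<mu>" and E: "E \<in> M"
  shows "fa_integral \<Omega> \<mu> (indicator E) = \<mu> E"
proof (cases "E = \<Omega> - E")
  case True
  then have "E = {}" "\<Omega> = {}" by auto
  then show ?thesis using fa_empty[OF fa] unfolding fa_integral_def by simp
next
  case False
  have Q: "part \<Omega> M {E, \<Omega> - E}" by (rule part_two[OF E])
  have "fa_integral \<Omega> \<mu> (indicator E) = (\<Sum>D\<in>{E, \<Omega> - E}. indicator E (rep D) * \<mu> D)"
    by (rule int_part[OF fa Q cb_ind[OF Q]]) simp
  also have "\<dots> = indicator E (rep E) * \<mu> E + indicator E (rep (\<Omega> - E)) * \<mu> (\<Omega> - E)"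
  proof -
    have sum2: "(\<Sum>D\<in>{E, \<Omega> - E}. g D) = g E + g (\<Omega> - E)" for g :: "'a set \<Rightarrow> real"
      using False by simp
    show ?thesis by (rule sum2)
  qed
  also have "\<dots> = \<mu> E"
  proof -
    have "indicator E (rep E) * \<mu> E = \<mu> E"
      using rep_in[of E] fa_empty[OF fa] by (cases "E = {}") auto
    moreover have "indicator E (rep (\<Omega> - E)) * \<mu> (\<Omega> - E) = 0"
    proof (cases "\<Omega> - E = {}")
      case True then have "\<mu> (\<Omega> - E) = 0" using fa_empty[OF fa] by metis
      then show ?thesis by simp
    next
      case False then have "rep (\<Omega> - E) \<in> \<Omega> - E" by (rule rep_in)
      then show ?thesis by simp
    qed
    ultimately show ?thesis by linarith
  qed
  finally show ?thesis .
qed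

lemma simple_sum: "finite S \<Longrightarrow> (\<And>i. i \<in> S \<Longrightarrow> simple_fun \<Omega> M (f i)) \<Longrightarrow> simple_fun \<Omega> M (\<lambda>x. \<Sum>i\<in>S. f i x)"
proof (induction S rule: finite_induct)
  case empty then show ?case using simple_const by simp
next
  case (insert a S)
  then show ?case using simple_comb[of "f a" "\<lambda>x. \<Sum>i\<in>S. f i x" "(+)"] by simp
qed

lemma int_sum:
  assumes fa: "fin_additive M \<mu>"
  shows "finite S \<Longrightarrow> (\<And>i. i \<in> S \<Longrightarrow> simple_fun \<Omega> M (f i)) \<Longrightarrow>
    fa_integral \<Omega> \<mu> (\<lambda>x. \<Sum>i\<in>S. f i x) = (\<Sum>i\<in>S. fa_integral \<Omega> \<mu> (f i))"
proof (induction S rule: finite_induct)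
  case empty
  have "\<forall>y\<in>(\<lambda>x. \<Sum>i\<in>{}. f i x) ` \<Omega>. y = 0" by auto
  then show ?case unfolding fa_integral_def by (subst sum.neutral) auto
next
  case (insert a S)
  have "fa_integral \<Omega> \<mu> (\<lambda>x. \<Sum>i\<in>insert a S. f i x) = fa_integral \<Omega> \<mu> (\<lambda>x. f a x + (\<Sum>i\<in>S. f i x))"
    using insert by simp
  also have "\<dots> = fa_integral \<Omega> \<mu> (f a) + fa_integral \<Omega> \<mu> (\<lambda>x. \<Sum>i\<in>S. f i x)"
  proof -
    have "simple_fun \<Omega> M (f a)" "simple_fun \<Omega> M (\<lambda>x. \<Sum>i\<in>S. f i x)"
      using insert simple_sum[of S f] by auto
    then show ?thesis by (rule int_add[OF fa])
  qed
  finally show ?case using insert by simp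
qed

end

definition posm :: "'a set \<Rightarrow> 'a set set \<Rightarrow> ('a set \<Rightarrow> real) \<Rightarrow> bool" where
  "posm \<Omega> M m \<longleftrightarrow> m \<in> ba \<Omega> M \<and> (\<forall>E\<in>M. 0 \<le> m E)"

context algebra begin

lemma ba_fa: "\<mu> \<in> ba \<Omega> M \<Longrightarrow> fin_additive M \<mu>" unfolding ba_def by auto
lemma ba_zero: "\<mu> \<in> ba \<Omega> M \<Longrightarrow> E \<notin> M \<Longrightarrow> \<mu> E = 0" unfolding ba_def by auto
lemma ba_bdd: "\<mu> \<in> ba \<Omega> M \<Longrightarrow> bdd_above (partition_sums M \<mu> \<Omega>)" unfolding ba_def by auto

lemma ps_Omega: "finite P \<Longrightarrow> P \<subseteq> M \<Longrightarrow> disjoint P \<Longrightarrow> \<Union>P = E \<Longrightarrow> (\<Sum>B\<in>P. \<bar>\<mu> B\<bar>) \<in> partition_sums M \<mu> E"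
  unfolding partition_sums_def by auto

lemma psum_le:
  assumes mu: "\<mu> \<in> ba \<Omega> M" and P: "finite P" "P \<subseteq> M" "disjoint P"
  shows "(\<Sum>B\<in>P. \<bar>\<mu> B\<bar>) \<le> tot_var M \<mu> \<Omega>"
proof -
  let ?C = "\<Omega> - \<Union>P"
  have UP: "\<Union>P \<in> M" using P by (intro finite_Union) auto
  have C: "?C \<in> M" using UP by (rule compl_sets)
  let ?R = "insert ?C P"
  have dR: "disjoint ?R" using P(3) unfolding disjoint_def by auto
  have uR: "\<Union>?R = \<Omega>" using P sets_into_space by auto
  have "(\<Sum>B\<in>P. \<bar>\<mu> B\<bar>) \<le> (\<Sum>B\<in>?R. \<bar>\<mu> B\<bar>)"
    using P by (intro sum_mono2) auto
  also have "\<dots> \<le> tot_var M \<mu> \<Omega>"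
    unfolding tot_var_def using P C dR uR ba_bdd[OF mu]
    by (intro cSup_upper ps_Omega) auto
  finally show ?thesis .
qed

lemma ps_bdd: assumes mu: "\<mu> \<in> ba \<Omega> M" shows "bdd_above (partition_sums M \<mu> E)"
proof (rule bdd_aboveI)
  fix s assume "s \<in> partition_sums M \<mu> E"
  then obtain P where "finite P" "P \<subseteq> M" "disjoint P" "s = (\<Sum>B\<in>P. \<bar>\<mu> B\<bar>)"
    unfolding partition_sums_def by auto
  then show "s \<le> tot_var M \<mu> \<Omega>" using psum_le[OF mu] by simp
qed

lemma ps_ne: "E \<in> M \<Longrightarrow> partition_sums M \<mu> E \<noteq> {}"
  using ps_Omega[of "{E}" E \<mu>] by auto

lemma tv_ge: assumes mu: "\<mu> \<in> ba \<Omega> M" and E: "E \<in> M" shows "\<bar>\<mu> E\<bar> \<le> tot_var M \<mu> E"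
  unfolding tot_var_def using ps_Omega[of "{E}" E \<mu>] E ps_bdd[OF mu] by (intro cSup_upper) auto

lemma tv_nonneg: "\<mu> \<in> ba \<Omega> M \<Longrightarrow> E \<in> M \<Longrightarrow> 0 \<le> tot_var M \<mu> E"
  using tv_ge by (meson abs_ge_zero order_trans)

lemma le_tv:
  assumes "\<mu> \<in> ba \<Omega> M" "finite P" "P \<subseteq> M" "disjoint P" "\<Union>P = E"
  shows "(\<Sum>B\<in>P. \<bar>\<mu> B\<bar>) \<le> tot_var M \<mu> E"
  unfolding tot_var_def using assms ps_bdd by (intro cSup_upper ps_Omega) auto

lemma tv_least:
  assumes E: "E \<in> M" and le: "\<And>P. finite P \<Longrightarrow> P \<subseteq> M \<Longrightarrow> disjoint P \<Longrightarrow> \<Union>P = E \<Longrightarrow> (\<Sum>B\<in>P. \<bar>\<mu> B\<bar>) \<le> c"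
  shows "tot_var M \<mu> E \<le> c"
  unfolding tot_var_def using ps_ne[OF E] le by (intro cSup_least) (auto simp: partition_sums_def)

lemma tv_add:
  assumes mu: "\<mu> \<in> ba \<Omega> M" and E: "E \<in> M" and F: "F \<in> M" and d: "E \<inter> F = {}"
  shows "tot_var M \<mu> (E \<union> F) = tot_var M \<mu> E + tot_var M \<mu> F"
proof (rule antisym)
  have fa: "fin_additive M \<mu>" by (rule ba_fa[OF mu])
  have EF: "E \<union> F \<in> M" using E F by auto
  show "tot_var M \<mu> (E \<union> F) \<le> tot_var M \<mu> E + tot_var M \<mu> F"
  proof (rule tv_least[OF EF])
    fix P assume P: "finite P" "P \<subseteq> M" "disjoint P" "\<Union>P = E \<union> F"
    have sE: "(\<Sum>B\<in>P. \<bar>\<mu> (B \<inter> E)\<bar>) \<le> tot_var M \<mu> E"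
    proof -
      have "(\<Sum>B\<in>P. \<bar>\<mu> (B \<inter> E)\<bar>) = (\<Sum>D\<in>(\<lambda>B. B \<inter> E) ` P. \<bar>\<mu> D\<bar>)"
      proof (rule sum.reindex_nontrivial[symmetric, unfolded o_def])
        show "finite P" using P by simp
        fix x y assume "x \<in> P" "y \<in> P" "x \<noteq> y" "x \<inter> E = y \<inter> E"
        then have "x \<inter> E = {}" using P(3) unfolding disjoint_def by auto
        then show "\<bar>\<mu> (x \<inter> E)\<bar> = 0" using fa_empty[OF fa] by simp
      qed
      also have "\<dots> \<le> tot_var M \<mu> E"
        using P E by (intro le_tv[OF mu]) (auto simp: disjoint_def)
      finally show ?thesis .
    qed
    have sF: "(\<Sum>B\<in>P. \<bar>\<mu> (B \<inter> F)\<bar>) \<le> tot_var M \<mu> F"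
    proof -
      have "(\<Sum>B\<in>P. \<bar>\<mu> (B \<inter> F)\<bar>) = (\<Sum>D\<in>(\<lambda>B. B \<inter> F) ` P. \<bar>\<mu> D\<bar>)"
      proof (rule sum.reindex_nontrivial[symmetric, unfolded o_def])
        show "finite P" using P by simp
        fix x y assume "x \<in> P" "y \<in> P" "x \<noteq> y" "x \<inter> F = y \<inter> F"
        then have "x \<inter> F = {}" using P(3) unfolding disjoint_def by auto
        then show "\<bar>\<mu> (x \<inter> F)\<bar> = 0" using fa_empty[OF fa] by simp
      qed
      also have "\<dots> \<le> tot_var M \<mu> F"
        using P F by (intro le_tv[OF mu]) (auto simp: disjoint_def)
      finally show ?thesis .
    qed
    have "\<bar>\<mu> B\<bar> \<le> \<bar>\<mu> (B \<inter> E)\<bar> + \<bar>\<mu> (B \<inter> F)\<bar>" if B: "B \<in> P" for B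
    proof -
      have "B = (B \<inter> E) \<union> (B \<inter> F)" using P(4) B by auto
      moreover have "\<mu> ((B \<inter> E) \<union> (B \<inter> F)) = \<mu> (B \<inter> E) + \<mu> (B \<inter> F)"
        using fa E F B P(2) d unfolding fin_additive_def by (metis Int Int_assoc Int_commute Int_empty_right subsetD inf_left_commute)
      ultimately show ?thesis by (metis abs_triangle_ineq)
    qed
    then have "(\<Sum>B\<in>P. \<bar>\<mu> B\<bar>) \<le> (\<Sum>B\<in>P. \<bar>\<mu> (B \<inter> E)\<bar>) + (\<Sum>B\<in>P. \<bar>\<mu> (B \<inter> F)\<bar>)"
      by (simp add: sum.distrib[symmetric] sum_mono)
    then show "(\<Sum>B\<in>P. \<bar>\<mu> B\<bar>) \<le> tot_var M \<mu> E + tot_var M \<mu> F" using sE sF by linarith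
  qed
  show "tot_var M \<mu> E + tot_var M \<mu> F \<le> tot_var M \<mu> (E \<union> F)"
  proof -
    have key: "s1 + s2 \<le> tot_var M \<mu> (E \<union> F)" if s1: "s1 \<in> partition_sums M \<mu> E" and s2: "s2 \<in> partition_sums M \<mu> F" for s1 s2
    proof -
      obtain P1 where P1: "finite P1" "P1 \<subseteq> M" "disjoint P1" "\<Union>P1 = E" "s1 = (\<Sum>B\<in>P1. \<bar>\<mu> B\<bar>)"
        using s1 unfolding partition_sums_def by auto
      obtain P2 where P2: "finite P2" "P2 \<subseteq> M" "disjoint P2" "\<Union>P2 = F" "s2 = (\<Sum>B\<in>P2. \<bar>\<mu> B\<bar>)"
        using s2 unfolding partition_sums_def by auto
      have int: "P1 \<inter> P2 \<subseteq> {{}}" using P1(4) P2(4) d by auto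
      have "(\<Sum>B\<in>P1 \<inter> P2. \<bar>\<mu> B\<bar>) = 0"
        using int fa_empty[OF fa] by (intro sum.neutral) auto
      then have "(\<Sum>B\<in>P1 \<union> P2. \<bar>\<mu> B\<bar>) = s1 + s2"
        using sum.union_inter[of P1 P2 "\<lambda>B. \<bar>\<mu> B\<bar>"] P1 P2 by simp
      moreover have "disjoint (P1 \<union> P2)"
        unfolding disjoint_def
      proof (intro ballI impI)
        fix a b assume a: "a \<in> P1 \<union> P2" and b: "b \<in> P1 \<union> P2" and ab: "a \<noteq> b"
        show "a \<inter> b = {}"
        proof (cases "a \<in> P1")
          case True
          show ?thesis
          proof (cases "b \<in> P1")
            case True then show ?thesis using \<open>a \<in> P1\<close> ab P1(3) unfolding disjoint_def by auto
          next
            case False then have "b \<in> P2" using b by auto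
            then show ?thesis using \<open>a \<in> P1\<close> P1(4) P2(4) d by auto
          qed
        next
          case False then have aP2: "a \<in> P2" using a by auto
          show ?thesis
          proof (cases "b \<in> P2")
            case True then show ?thesis using aP2 ab P2(3) unfolding disjoint_def by auto
          next
            case False then have "b \<in> P1" using b by auto
            then show ?thesis using aP2 P1(4) P2(4) d by auto
          qed
        qed
      qed
      ultimately show ?thesis using P1 P2 le_tv[OF mu, of "P1 \<union> P2" "E \<union> F"] by auto
    qed
    have "s1 \<le> tot_var M \<mu> (E \<union> F) - tot_var M \<mu> F" if s1: "s1 \<in> partition_sums M \<mu> E" for s1
    proof -
      have "tot_var M \<mu> F \<le> tot_var M \<mu> (E \<union> F) - s1"
        unfolding tot_var_def[of M \<mu> F] using ps_ne[OF F] key[OF s1]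
        by (intro cSup_least) (auto simp: tot_var_def algebra_simps)
      then show ?thesis by linarith
    qed
    then have "tot_var M \<mu> E \<le> tot_var M \<mu> (E \<union> F) - tot_var M \<mu> F"
      unfolding tot_var_def[of M \<mu> E] using ps_ne[OF E] by (intro cSup_least) auto
    then show ?thesis by linarith
  qed
qed

end

definition tvm :: "'a set set \<Rightarrow> ('a set \<Rightarrow> real) \<Rightarrow> 'a set \<Rightarrow> real" where
  "tvm M \<mu> = (\<lambda>E. if E \<in> M then tot_var M \<mu> E else 0)"

context algebra begin

lemma ba_intro:
  assumes "fin_additive M \<nu>" "\<And>E. E \<notin> M \<Longrightarrow> \<nu> E = 0"
    "\<And>P. finite P \<Longrightarrow> P \<subseteq> M \<Longrightarrow> disjoint P \<Longrightarrow> \<Union>P = \<Omega> \<Longrightarrow> (\<Sum>B\<in>P. \<bar>\<nu> B\<bar>) \<le> c"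
  shows "\<nu> \<in> ba \<Omega> M"
  unfolding ba_def using assms by (auto simp: bdd_above_def partition_sums_def)

lemma ba_add: assumes mu: "\<mu> \<in> ba \<Omega> M" and nu: "\<nu> \<in> ba \<Omega> M" shows "(\<lambda>E. \<mu> E + \<nu> E) \<in> ba \<Omega> M"
proof (rule ba_intro)
  show "fin_additive M (\<lambda>E. \<mu> E + \<nu> E)" using ba_fa[OF mu] ba_fa[OF nu] unfolding fin_additive_def by auto
  show "\<And>E. E \<notin> M \<Longrightarrow> \<mu> E + \<nu> E = 0" using ba_zero[OF mu] ba_zero[OF nu] by auto
  fix P assume P: "finite P" "P \<subseteq> M" "disjoint P" "\<Union>P = \<Omega>"
  have "(\<Sum>B\<in>P. \<bar>\<mu> B + \<nu> B\<bar>) \<le> (\<Sum>B\<in>P. \<bar>\<mu> B\<bar>) + (\<Sum>B\<in>P. \<bar>\<nu> B\<bar>)"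
    by (simp add: sum.distrib[symmetric] sum_mono abs_triangle_ineq)
  also have "\<dots> \<le> tot_var M \<mu> \<Omega> + tot_var M \<nu> \<Omega>" using psum_le[OF mu P(1-3)] psum_le[OF nu P(1-3)] by simp
  finally show "(\<Sum>B\<in>P. \<bar>\<mu> B + \<nu> B\<bar>) \<le> tot_var M \<mu> \<Omega> + tot_var M \<nu> \<Omega>" .
qed

lemma ba_cmul: assumes mu: "\<mu> \<in> ba \<Omega> M" shows "(\<lambda>E. c * \<mu> E) \<in> ba \<Omega> M"
proof (rule ba_intro)
  show "fin_additive M (\<lambda>E. c * \<mu> E)" using ba_fa[OF mu] unfolding fin_additive_def by (auto simp: algebra_simps)
  show "\<And>E. E \<notin> M \<Longrightarrow> c * \<mu> E = 0" using ba_zero[OF mu] by auto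
  fix P assume P: "finite P" "P \<subseteq> M" "disjoint P" "\<Union>P = \<Omega>"
  have "(\<Sum>B\<in>P. \<bar>c * \<mu> B\<bar>) = \<bar>c\<bar> * (\<Sum>B\<in>P. \<bar>\<mu> B\<bar>)" by (simp add: abs_mult sum_distrib_left)
  also have "\<dots> \<le> \<bar>c\<bar> * tot_var M \<mu> \<Omega>" using psum_le[OF mu P(1-3)] by (simp add: mult_left_mono)
  finally show "(\<Sum>B\<in>P. \<bar>c * \<mu> B\<bar>) \<le> \<bar>c\<bar> * tot_var M \<mu> \<Omega>" .
qed

lemma ba_diff: assumes mu: "\<mu> \<in> ba \<Omega> M" and nu: "\<nu> \<in> ba \<Omega> M" shows "(\<lambda>E. \<mu> E - \<nu> E) \<in> ba \<Omega> M"
  using ba_add[OF mu ba_cmul[OF nu, of "-1"]] by simp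

lemma ba_0: "(\<lambda>E. 0) \<in> ba \<Omega> M"
  by (rule ba_intro[where c=0]) (auto simp: fin_additive_def)

lemma tv_cmul_le: assumes mu: "\<mu> \<in> ba \<Omega> M" shows "tot_var M (\<lambda>E. c * \<mu> E) \<Omega> \<le> \<bar>c\<bar> * tot_var M \<mu> \<Omega>"
proof (rule tv_least[OF top])
  fix P assume P: "finite P" "P \<subseteq> M" "disjoint P" "\<Union>P = \<Omega>"
  have "(\<Sum>B\<in>P. \<bar>c * \<mu> B\<bar>) = \<bar>c\<bar> * (\<Sum>B\<in>P. \<bar>\<mu> B\<bar>)" by (simp add: abs_mult sum_distrib_left)
  also have "\<dots> \<le> \<bar>c\<bar> * tot_var M \<mu> \<Omega>" using psum_le[OF mu P(1-3)] by (simp add: mult_left_mono)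
  finally show "(\<Sum>B\<in>P. \<bar>c * \<mu> B\<bar>) \<le> \<bar>c\<bar> * tot_var M \<mu> \<Omega>" .
qed

lemma abs_le_norm: "\<mu> \<in> ba \<Omega> M \<Longrightarrow> E \<in> M \<Longrightarrow> \<bar>\<mu> E\<bar> \<le> tot_var M \<mu> \<Omega>"
  using psum_le[of \<mu> "{E}"] by auto

lemma norm_zero: assumes mu: "\<mu> \<in> ba \<Omega> M" and z: "tot_var M \<mu> \<Omega> = 0" shows "\<mu> = (\<lambda>E. 0)"
proof
  fix E show "\<mu> E = 0"
    using abs_le_norm[OF mu, of E] z ba_zero[OF mu, of E] by (cases "E \<in> M") auto
qed

lemma norm_nonneg: "\<mu> \<in> ba \<Omega> M \<Longrightarrow> 0 \<le> tot_var M \<mu> \<Omega>"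
  using tv_nonneg top by auto

lemma posm_tv: assumes p: "posm \<Omega> M m" and E: "E \<in> M" shows "tot_var M m E = m E"
proof (rule antisym)
  have m: "m \<in> ba \<Omega> M" using p unfolding posm_def by auto
  show "tot_var M m E \<le> m E"
  proof (rule tv_least[OF E])
    fix P assume P: "finite P" "P \<subseteq> M" "disjoint P" "\<Union>P = E"
    have "(\<Sum>B\<in>P. \<bar>m B\<bar>) = (\<Sum>B\<in>P. m B)" using p P unfolding posm_def by (intro sum.cong) auto
    also have "\<dots> = m E" using fa_Union[OF ba_fa[OF m] P(1-3)] P(4) by simp
    finally show "(\<Sum>B\<in>P. \<bar>m B\<bar>) \<le> m E" by simp
  qed
  show "m E \<le> tot_var M m E" using tv_ge[OF m E] by simp
qed

lemma posm_mono: assumes p: "posm \<Omega> M m" and E: "E \<in> M" and F: "F \<in> M" and sub: "E \<subseteq> F" shows "m E \<le> m F"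
proof -
  have m: "m \<in> ba \<Omega> M" using p unfolding posm_def by auto
  have "F = E \<union> (F - E)" using sub by auto
  then have "m F = m (E \<union> (F - E))" by simp
  also have "\<dots> = m E + m (F - E)"
  proof -
    have add: "\<And>X Y. X \<in> M \<Longrightarrow> Y \<in> M \<Longrightarrow> X \<inter> Y = {} \<Longrightarrow> m (X \<union> Y) = m X + m Y"
      using ba_fa[OF m] unfolding fin_additive_def by auto
    have FE: "F - E \<in> M" using Diff[OF F E] .
    have d: "E \<inter> (F - E) = {}" by auto
    show ?thesis by (rule add[OF E FE d])
  qed
  finally have "m F = m E + m (F - E)" .
  moreover have "0 \<le> m (F - E)" using p E F unfolding posm_def by auto
  ultimately show ?thesis by simp
qed

lemma dom_ba:
  assumes fa: "fin_additive M \<nu>" and z: "\<And>E. E \<notin> M \<Longrightarrow> \<nu> E = 0" and p: "posm \<Omega> M m"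
    and le: "\<And>E. E \<in> M \<Longrightarrow> \<bar>\<nu> E\<bar> \<le> m E"
  shows "\<nu> \<in> ba \<Omega> M" "tot_var M \<nu> \<Omega> \<le> m \<Omega>"
proof -
  have m: "m \<in> ba \<Omega> M" using p unfolding posm_def by auto
  have bnd: "(\<Sum>B\<in>P. \<bar>\<nu> B\<bar>) \<le> m \<Omega>" if P: "finite P" "P \<subseteq> M" "disjoint P" "\<Union>P = \<Omega>" for P
  proof -
    have "(\<Sum>B\<in>P. \<bar>\<nu> B\<bar>) \<le> (\<Sum>B\<in>P. m B)" using le P by (intro sum_mono) auto
    also have "\<dots> = m \<Omega>" using fa_Union[OF ba_fa[OF m] P(1-3)] P(4) by simp
    finally show ?thesis .
  qed
  show "\<nu> \<in> ba \<Omega> M" by (rule ba_intro[OF fa z bnd])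
  show "tot_var M \<nu> \<Omega> \<le> m \<Omega>" by (rule tv_least[OF top bnd])
qed

lemma posm_tvm: assumes mu: "\<mu> \<in> ba \<Omega> M" shows "posm \<Omega> M (tvm M \<mu>)"
proof -
  have fa: "fin_additive M (tvm M \<mu>)"
    unfolding fin_additive_def tvm_def using tv_add[OF mu] by auto
  have bnd: "(\<Sum>B\<in>P. \<bar>tvm M \<mu> B\<bar>) \<le> tot_var M \<mu> \<Omega>" if P: "finite P" "P \<subseteq> M" "disjoint P" "\<Union>P = \<Omega>" for P
  proof -
    have "(\<Sum>B\<in>P. \<bar>tvm M \<mu> B\<bar>) = (\<Sum>B\<in>P. tvm M \<mu> B)"
      using P tv_nonneg[OF mu] unfolding tvm_def by (intro sum.cong) auto
    also have "\<dots> = tvm M \<mu> \<Omega>" using fa_Union[OF fa P(1-3)] P(4) by simp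
    finally show ?thesis unfolding tvm_def using top by simp
  qed
  have "tvm M \<mu> \<in> ba \<Omega> M" by (rule ba_intro[OF fa _ bnd]) (simp add: tvm_def)
  then show ?thesis unfolding posm_def tvm_def using tv_nonneg[OF mu] by auto
qed

lemma tvm_ge: "\<mu> \<in> ba \<Omega> M \<Longrightarrow> E \<in> M \<Longrightarrow> \<bar>\<mu> E\<bar> \<le> tvm M \<mu> E"
  unfolding tvm_def using tv_ge by auto

lemma sup_norm_ge: assumes f: "simple_fun \<Omega> M f" and x: "x \<in> \<Omega>" shows "\<bar>f x\<bar> \<le> sup_norm \<Omega> f"
proof -
  have "(\<lambda>x. \<bar>f x\<bar>) ` \<Omega> = abs ` (f ` \<Omega>)" by (simp add: image_image)
  then have "finite ((\<lambda>x. \<bar>f x\<bar>) ` \<Omega>)" using f unfolding simple_fun_def by simp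
  then show ?thesis unfolding sup_norm_def using x by (intro cSup_upper) auto
qed

lemma sup_norm_nonneg: assumes f: "simple_fun \<Omega> M f" shows "0 \<le> sup_norm \<Omega> f"
proof -
  have "(\<lambda>x. \<bar>f x\<bar>) ` \<Omega> = abs ` (f ` \<Omega>)" by (simp add: image_image)
  then have "finite ((\<lambda>x. \<bar>f x\<bar>) ` \<Omega>)" using f unfolding simple_fun_def by simp
  then show ?thesis unfolding sup_norm_def by (intro cSup_upper) auto
qed

lemma sup_norm_le: assumes K: "0 \<le> K" and le: "\<And>x. x \<in> \<Omega> \<Longrightarrow> \<bar>f x\<bar> \<le> K" shows "sup_norm \<Omega> f \<le> K"
  unfolding sup_norm_def using K le by (intro cSup_least) auto

lemma int_bound:
  assumes nu: "\<nu> \<in> ba \<Omega> M" and f: "simple_fun \<Omega> M f"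
  shows "\<bar>fa_integral \<Omega> \<nu> f\<bar> \<le> sup_norm \<Omega> f * tot_var M \<nu> \<Omega>"
proof -
  have Q: "part \<Omega> M (lev \<Omega> f)" "cb (lev \<Omega> f) f" using simple_lev[OF f] by auto
  let ?Q = "lev \<Omega> f"
  have "\<bar>fa_integral \<Omega> \<nu> f\<bar> = \<bar>\<Sum>D\<in>?Q. f (rep D) * \<nu> D\<bar>" using int_part[OF ba_fa[OF nu] Q] by simp
  also have "\<dots> \<le> (\<Sum>D\<in>?Q. \<bar>f (rep D) * \<nu> D\<bar>)" by (rule sum_abs)
  also have "\<dots> \<le> (\<Sum>D\<in>?Q. sup_norm \<Omega> f * \<bar>\<nu> D\<bar>)"
  proof (rule sum_mono)
    fix D assume D: "D \<in> ?Q"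
    show "\<bar>f (rep D) * \<nu> D\<bar> \<le> sup_norm \<Omega> f * \<bar>\<nu> D\<bar>"
    proof (cases "D = {}")
      case True then show ?thesis using fa_empty[OF ba_fa[OF nu]] by simp
    next
      case False
      have "rep D \<in> D" using rep_in[OF False] .
      then have "rep D \<in> \<Omega>" using part_sub[OF Q(1) D] by auto
      then show ?thesis using sup_norm_ge[OF f] by (simp add: abs_mult mult_right_mono)
    qed
  qed
  also have "\<dots> = sup_norm \<Omega> f * (\<Sum>D\<in>?Q. \<bar>\<nu> D\<bar>)" by (simp add: sum_distrib_left)
  also have "\<dots> \<le> sup_norm \<Omega> f * tot_var M \<nu> \<Omega>"
    using Q(1) psum_le[OF nu] sup_norm_nonneg[OF f] unfolding part_def by (simp add: mult_left_mono)
  finally show ?thesis .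
qed

end

definition dens :: "'a set \<Rightarrow> 'a set set \<Rightarrow> ('a set \<Rightarrow> real) \<Rightarrow> ('a \<Rightarrow> real) \<Rightarrow> 'a set \<Rightarrow> real" where
  "dens \<Omega> M m h = (\<lambda>E. if E \<in> M then fa_integral \<Omega> m (\<lambda>x. indicator E x * h x) else 0)"

definition kf :: "('a set \<Rightarrow> real) \<Rightarrow> ('a set \<Rightarrow> real) \<Rightarrow> 'a set set \<Rightarrow> 'a \<Rightarrow> real" where
  "kf \<psi> m P = (\<lambda>x. \<Sum>B\<in>P. \<psi> B / m B * indicator B x)"

context algebra begin

lemma kf_val: assumes P: "part \<Omega> M P" and B: "B \<in> P" and x: "x \<in> B" shows "kf \<psi> m P x = \<psi> B / m B"
proof -
  have "kf \<psi> m P x = \<psi> B / m B * indicator B x + (\<Sum>B'\<in>P - {B}. \<psi> B' / m B' * indicator B' x)"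
    unfolding kf_def using P B unfolding part_def by (simp add: sum.remove)
  also have "(\<Sum>B'\<in>P - {B}. \<psi> B' / m B' * indicator B' x) = 0"
  proof (rule sum.neutral, rule ballI)
    fix B' assume "B' \<in> P - {B}"
    then have "x \<notin> B'" using part_unique[OF P B _ x] by auto
    then show "\<psi> B' / m B' * indicator B' x = 0" by simp
  qed
  finally show ?thesis using x by simp
qed

lemma kf_cb: assumes P: "part \<Omega> M P" shows "cb P (kf \<psi> m P)"
  unfolding cb_def
proof (intro ballI)
  fix D x y assume "D \<in> P" "x \<in> D" "y \<in> D"
  then show "kf \<psi> m P x = kf \<psi> m P y" using kf_val[OF P] by simp
qed

lemma kf_simple: assumes P: "part \<Omega> M P" shows "simple_fun \<Omega> M (kf \<psi> m P)"
  by (rule cb_simple[OF P kf_cb[OF P]])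

lemma kf_bound:
  assumes P: "part \<Omega> M P" and C: "0 \<le> C" and pos: "\<And>E. E \<in> M \<Longrightarrow> 0 \<le> m E" and le: "\<And>E. E \<in> M \<Longrightarrow> \<bar>\<psi> E\<bar> \<le> C * m E" and x: "x \<in> \<Omega>"
  shows "\<bar>kf \<psi> m P x\<bar> \<le> C"
proof -
  obtain B where B: "B \<in> P" "x \<in> B" using part_cover[OF P x] by auto
  have BM: "B \<in> M" using part_sets[OF P B(1)] .
  have "\<bar>\<psi> B / m B\<bar> \<le> C"
  proof (cases "m B = 0")
    case True then show ?thesis using C by simp
  next
    case False
    have "0 \<le> m B" using pos[OF BM] .
    then have "0 < m B" using False by simp
    have "\<bar>\<psi> B / m B\<bar> = \<bar>\<psi> B\<bar> / m B" using \<open>0 < m B\<close> by (simp add: abs_divide)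
    also have "\<dots> \<le> C" using le[OF BM] \<open>0 < m B\<close> by (simp add: pos_divide_le_eq mult.commute)
    finally show ?thesis .
  qed
  then show ?thesis using kf_val[OF P B] by simp
qed

lemma kf_id:
  assumes fm: "fin_additive M m" and fp: "fin_additive M \<psi>" and C: "0 \<le> C"
    and le: "\<And>E. E \<in> M \<Longrightarrow> \<bar>\<psi> E\<bar> \<le> C * m E"
    and Q: "part \<Omega> M Q" and g: "cb Q g"
  shows "fa_integral \<Omega> m (\<lambda>x. g x * kf \<psi> m Q x) = fa_integral \<Omega> \<psi> g"
proof -
  have c2: "cb Q (\<lambda>x. g x * kf \<psi> m Q x)" using cb_comb[OF g kf_cb[OF Q]] .
  have "g (rep D) * kf \<psi> m Q (rep D) * m D = g (rep D) * \<psi> D" if D: "D \<in> Q" for D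
  proof (cases "D = {}")
    case True then show ?thesis using fa_empty[OF fm] fa_empty[OF fp] by simp
  next
    case False
    have kv: "kf \<psi> m Q (rep D) = \<psi> D / m D" using kf_val[OF Q D rep_in[OF False]] .
    show ?thesis
    proof (cases "m D = 0")
      case True
      then have "\<psi> D = 0" using le[OF part_sets[OF Q D]] by simp
      then show ?thesis using True by simp
    next
      case False then show ?thesis using kv by simp
    qed
  qed
  then have eq: "(\<Sum>D\<in>Q. g (rep D) * kf \<psi> m Q (rep D) * m D) = (\<Sum>D\<in>Q. g (rep D) * \<psi> D)"
    by (rule sum.cong[OF refl])
  show ?thesis unfolding int_part[OF fm Q c2] int_part[OF fp Q g] eq ..
qed

lemma int_const: assumes fm: "fin_additive M m" shows "fa_integral \<Omega> m (\<lambda>x. c) = c * m \<Omega>"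
proof -
  have "fa_integral \<Omega> m (\<lambda>x. c) = fa_integral \<Omega> m (\<lambda>x. c * indicator \<Omega> x)"
    by (rule int_cong) simp
  also have "\<dots> = c * m \<Omega>" using int_cmul[OF fm simple_ind[OF top]] int_ind[OF fm top] by simp
  finally show ?thesis .
qed

lemma dens_val:
  assumes fm: "fin_additive M m" and Q: "part \<Omega> M Q" and h: "cb Q h" and D: "D \<in> Q"
  shows "dens \<Omega> M m h D = h (rep D) * m D"
proof -
  have DM: "D \<in> M" using part_sets[OF Q D] .
  have "fa_integral \<Omega> m (\<lambda>x. indicator D x * h x) = fa_integral \<Omega> m (\<lambda>x. h (rep D) * indicator D x)"
  proof (rule int_cong)
    fix x assume "x \<in> \<Omega>"
    show "indicator D x * h x = h (rep D) * indicator D x"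
      using cb_val[OF Q h D, of x] by (cases "x \<in> D") auto
  qed
  also have "\<dots> = h (rep D) * m D" using int_cmul[OF fm simple_ind[OF DM]] int_ind[OF fm DM] by simp
  finally show ?thesis unfolding dens_def using DM by simp
qed

lemma dens_fa: assumes fm: "fin_additive M m" and h: "simple_fun \<Omega> M h" shows "fin_additive M (dens \<Omega> M m h)"
  unfolding fin_additive_def
proof (intro ballI impI)
  fix E F assume E: "E \<in> M" and F: "F \<in> M" and d: "E \<inter> F = {}"
  have s1: "simple_fun \<Omega> M (\<lambda>x. indicator E x * h x)" using simple_comb[OF simple_ind[OF E] h] .
  have s2: "simple_fun \<Omega> M (\<lambda>x. indicator F x * h x)" using simple_comb[OF simple_ind[OF F] h] .
  have "fa_integral \<Omega> m (\<lambda>x. indicator (E \<union> F) x * h x) = fa_integral \<Omega> m (\<lambda>x. indicator E x * h x + indicator F x * h x)"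
    using d by (intro int_cong) (auto simp: indicator_def)
  also have "\<dots> = fa_integral \<Omega> m (\<lambda>x. indicator E x * h x) + fa_integral \<Omega> m (\<lambda>x. indicator F x * h x)"
    by (rule int_add[OF fm s1 s2])
  finally show "dens \<Omega> M m h (E \<union> F) = dens \<Omega> M m h E + dens \<Omega> M m h F"
    unfolding dens_def using E F by auto
qed

lemma dens_le:
  assumes p: "posm \<Omega> M m" and h: "simple_fun \<Omega> M h" and hb: "\<And>x. x \<in> \<Omega> \<Longrightarrow> \<bar>h x\<bar> \<le> C" and E: "E \<in> M"
  shows "\<bar>dens \<Omega> M m h E\<bar> \<le> C * m E"
proof -
  have fm: "fin_additive M m" using p ba_fa unfolding posm_def by auto
  have pos: "\<And>E. E \<in> M \<Longrightarrow> 0 \<le> m E" using p unfolding posm_def by auto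
  have s1: "simple_fun \<Omega> M (\<lambda>x. indicator E x * h x)" using simple_comb[OF simple_ind[OF E] h] .
  have s2: "simple_fun \<Omega> M (\<lambda>x. C * indicator E x)" using simple_comb1[OF simple_ind[OF E]] .
  have s3: "simple_fun \<Omega> M (\<lambda>x. - (C * indicator E x))" using simple_comb1[OF simple_ind[OF E]] .
  have i2: "fa_integral \<Omega> m (\<lambda>x. C * indicator E x) = C * m E" using int_cmul[OF fm simple_ind[OF E]] int_ind[OF fm E] by simp
  have i3: "fa_integral \<Omega> m (\<lambda>x. - (C * indicator E x)) = - (C * m E)" using int_cmul[OF fm simple_ind[OF E], of "-C"] int_ind[OF fm E] by simp
  have l1: "\<And>x. x \<in> \<Omega> \<Longrightarrow> indicator E x * h x \<le> C * indicator E x"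
    using hb by (auto simp: indicator_def abs_le_iff)
  have l2: "- (C * indicator E x) \<le> indicator E x * h x" if x: "x \<in> \<Omega>" for x
  proof -
    have "\<bar>h x\<bar> \<le> C" using hb[OF x] .
    then have "- C \<le> h x" by linarith
    then show ?thesis by (cases "x \<in> E") auto
  qed
  have "fa_integral \<Omega> m (\<lambda>x. indicator E x * h x) \<le> C * m E"
    using int_mono[OF fm pos s1 s2 l1] i2 by simp
  moreover have "- (C * m E) \<le> fa_integral \<Omega> m (\<lambda>x. indicator E x * h x)"
    using int_mono[OF fm pos s3 s1 l2] i3 by simp
  ultimately show ?thesis unfolding dens_def using E by simp
qed

lemma posm_cmul: "posm \<Omega> M m \<Longrightarrow> 0 \<le> c \<Longrightarrow> posm \<Omega> M (\<lambda>E. c * m E)"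
  unfolding posm_def using ba_cmul by auto

lemma dens_ba:
  assumes p: "posm \<Omega> M m" and h: "simple_fun \<Omega> M h" and hb: "\<And>x. x \<in> \<Omega> \<Longrightarrow> \<bar>h x\<bar> \<le> C" and C: "0 \<le> C"
  shows "dens \<Omega> M m h \<in> ba \<Omega> M" "tot_var M (dens \<Omega> M m h) \<Omega> \<le> C * m \<Omega>"
proof -
  have fm: "fin_additive M m" using p ba_fa unfolding posm_def by auto
  show "dens \<Omega> M m h \<in> ba \<Omega> M" "tot_var M (dens \<Omega> M m h) \<Omega> \<le> C * m \<Omega>"
    using dom_ba[OF dens_fa[OF fm h] _ posm_cmul[OF p C] dens_le[OF p h hb]] by (auto simp: dens_def)
qed

lemma dens_int:
  assumes fm: "fin_additive M m" and h: "simple_fun \<Omega> M h" and g: "simple_fun \<Omega> M g"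
  shows "fa_integral \<Omega> (dens \<Omega> M m h) g = fa_integral \<Omega> m (\<lambda>x. g x * h x)"
proof -
  obtain Q where Q: "part \<Omega> M Q" "cb Q g" "cb Q h" by (rule simple_common[OF g h])
  have c: "cb Q (\<lambda>x. g x * h x)" using cb_comb[OF Q(2,3)] .
  show ?thesis using int_part[OF dens_fa[OF fm h] Q(1,2)] int_part[OF fm Q(1) c] dens_val[OF fm Q(1,3)]
    by (simp add: mult.assoc)
qed

lemma dens_cong: "(\<And>x. x \<in> \<Omega> \<Longrightarrow> h x = h' x) \<Longrightarrow> dens \<Omega> M m h = dens \<Omega> M m h'"
  unfolding dens_def by (intro ext) (auto intro!: int_cong)

lemma dens_sum:
  assumes fm: "fin_additive M m" and S: "finite S" and h: "\<And>i. i \<in> S \<Longrightarrow> simple_fun \<Omega> M (h i)"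
  shows "dens \<Omega> M m (\<lambda>x. \<Sum>i\<in>S. c i * h i x) = (\<lambda>E. \<Sum>i\<in>S. c i * dens \<Omega> M m (h i) E)"
proof
  fix E show "dens \<Omega> M m (\<lambda>x. \<Sum>i\<in>S. c i * h i x) E = (\<Sum>i\<in>S. c i * dens \<Omega> M m (h i) E)"
  proof (cases "E \<in> M")
    case False then show ?thesis unfolding dens_def by simp
  next
    case E: True
    have s: "simple_fun \<Omega> M (\<lambda>x. c i * (indicator E x * h i x))" if i: "i \<in> S" for i
      using simple_comb1[OF simple_comb[OF simple_ind[OF E] h[OF i]]] .
    have "fa_integral \<Omega> m (\<lambda>x. indicator E x * (\<Sum>i\<in>S. c i * h i x)) = fa_integral \<Omega> m (\<lambda>x. \<Sum>i\<in>S. c i * (indicator E x * h i x))"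
      by (simp add: sum_distrib_left algebra_simps)
    also have "\<dots> = (\<Sum>i\<in>S. fa_integral \<Omega> m (\<lambda>x. c i * (indicator E x * h i x)))"
      by (rule int_sum[OF fm S s])
    also have "\<dots> = (\<Sum>i\<in>S. c i * fa_integral \<Omega> m (\<lambda>x. indicator E x * h i x))"
      using int_cmul[OF fm] simple_comb[OF simple_ind[OF E] h] by (intro sum.cong) auto
    finally show ?thesis unfolding dens_def using E by simp
  qed
qed

lemma dens_ind: assumes fm: "fin_additive M m" and B: "B \<in> M" and E: "E \<in> M"
  shows "dens \<Omega> M m (indicator B) E = m (E \<inter> B)"
proof -
  have "fa_integral \<Omega> m (\<lambda>x. indicator E x * indicator B x) = fa_integral \<Omega> m (indicator (E \<inter> B))"
    by (intro int_cong) (simp add: indicator_def)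
  also have "\<dots> = m (E \<inter> B)" using int_ind[OF fm Int[OF E B]] .
  finally show ?thesis unfolding dens_def using E by simp
qed

end

lemma abs_le_quad:
  fixes d t :: real assumes t: "0 < t" shows "\<bar>d\<bar> \<le> t + (1 / t) * (d * d)"
proof -
  have "t * \<bar>d\<bar> \<le> t * t + d * d"
  proof (cases "\<bar>d\<bar> \<le> t")
    case True
    then have "t * \<bar>d\<bar> \<le> t * t" using t by (simp add: mult_left_mono)
    moreover have "0 \<le> d * d" by simp
    ultimately show ?thesis by linarith
  next
    case False
    then have "t \<le> \<bar>d\<bar>" by simp
    then have "t * \<bar>d\<bar> \<le> \<bar>d\<bar> * \<bar>d\<bar>" by (rule mult_right_mono) simp
    moreover have "\<bar>d\<bar> * \<bar>d\<bar> = d * d" by (simp add: abs_mult_self_eq)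
    moreover have "0 \<le> t * t" by simp
    ultimately show ?thesis by linarith
  qed
  then have "(t * \<bar>d\<bar>) / t \<le> (t * t + d * d) / t" by (rule divide_right_mono) (use t in auto)
  moreover have "(t * \<bar>d\<bar>) / t = \<bar>d\<bar>" using t by simp
  moreover have "(t * t + d * d) / t = t + (1 / t) * (d * d)" using t by (simp add: field_simps)
  ultimately show ?thesis by simp
qed

lemma sq_le: fixes k C :: real assumes "\<bar>k\<bar> \<le> C" shows "k * k \<le> C * C"
proof -
  have "\<bar>k\<bar> * \<bar>k\<bar> \<le> C * C" using assms by (intro mult_mono) auto
  then show ?thesis by (simp add: abs_mult_self_eq)
qed

context algebra begin

lemma mart:
  assumes p: "posm \<Omega> M m" and fp: "fin_additive M \<psi>" and C: "0 \<le> C"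
    and le: "\<And>E. E \<in> M \<Longrightarrow> \<bar>\<psi> E\<bar> \<le> C * m E" and eta: "0 < \<eta>"
  shows "\<exists>P. part \<Omega> M P \<and> (\<forall>Q. part \<Omega> M Q \<longrightarrow> refines Q P \<longrightarrow>
            fa_integral \<Omega> m (\<lambda>x. \<bar>kf \<psi> m Q x - kf \<psi> m P x\<bar>) \<le> \<eta>)"
proof -
  have fm: "fin_additive M m" using p ba_fa unfolding posm_def by auto
  have pos: "\<And>E. E \<in> M \<Longrightarrow> 0 \<le> m E" using p unfolding posm_def by auto
  define S where "S P = fa_integral \<Omega> m (\<lambda>x. kf \<psi> m P x * kf \<psi> m P x)" for P
  define SS where "SS = S ` {P. part \<Omega> M P}"
  have Sb: "S P \<le> C * C * m \<Omega>" if P: "part \<Omega> M P" for P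
  proof -
    have s1: "simple_fun \<Omega> M (\<lambda>x. kf \<psi> m P x * kf \<psi> m P x)"
      using simple_comb[OF kf_simple[OF P] kf_simple[OF P]] .
    have "S P \<le> fa_integral \<Omega> m (\<lambda>x. C * C)"
      unfolding S_def
    proof (rule int_mono[OF fm pos s1 simple_const])
      fix x assume x: "x \<in> \<Omega>"
      show "kf \<psi> m P x * kf \<psi> m P x \<le> C * C" by (rule sq_le[OF kf_bound[OF P C pos le x]])
    qed
    then show ?thesis using int_const[OF fm] by simp
  qed
  have SSne: "SS \<noteq> {}" unfolding SS_def using part_triv by auto
  have SSb: "bdd_above SS" unfolding SS_def using Sb by (auto simp: bdd_above_def)
  have mO: "0 \<le> m \<Omega>" using pos top by auto
  define t where "t = \<eta> / (2 * (m \<Omega> + 1))"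
  have t: "0 < t" unfolding t_def using eta mO by simp
  define \<delta> where "\<delta> = t * \<eta> / 2"
  have dl: "0 < \<delta>" unfolding \<delta>_def using t eta by simp
  have "Sup SS - \<delta> < Sup SS" using dl by simp
  then obtain s where s: "s \<in> SS" "Sup SS - \<delta> < s" using less_cSupE[OF _ SSne] by blast
  then obtain P where P: "part \<Omega> M P" "s = S P" unfolding SS_def by auto
  show ?thesis
  proof (intro exI[of _ P] conjI allI impI)
    show "part \<Omega> M P" by (rule P(1))
    fix Q assume Q: "part \<Omega> M Q" and ref: "refines Q P"
    let ?kP = "kf \<psi> m P" and ?kQ = "kf \<psi> m Q"
    have sP: "simple_fun \<Omega> M ?kP" by (rule kf_simple[OF P(1)])
    have sQ: "simple_fun \<Omega> M ?kQ" by (rule kf_simple[OF Q])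
    have cbPQ: "cb Q ?kP" using cb_refines[OF kf_cb[OF P(1)] ref] .
    have cross: "fa_integral \<Omega> m (\<lambda>x. ?kP x * ?kQ x) = S P"
      unfolding S_def using kf_id[OF fm fp C le Q cbPQ] kf_id[OF fm fp C le P(1) kf_cb[OF P(1)]] by simp
    have sPQ: "simple_fun \<Omega> M (\<lambda>x. ?kP x * ?kQ x)" using simple_comb[OF sP sQ] .
    have sPP: "simple_fun \<Omega> M (\<lambda>x. ?kP x * ?kP x)" using simple_comb[OF sP sP] .
    have sQQ: "simple_fun \<Omega> M (\<lambda>x. ?kQ x * ?kQ x)" using simple_comb[OF sQ sQ] .
    have s2PQ: "simple_fun \<Omega> M (\<lambda>x. 2 * (?kP x * ?kQ x))" using simple_comb1[OF sPQ] .
    have s3: "simple_fun \<Omega> M (\<lambda>x. ?kQ x * ?kQ x - 2 * (?kP x * ?kQ x))" using simple_comb[OF sQQ s2PQ] .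
    have sq: "fa_integral \<Omega> m (\<lambda>x. (?kQ x - ?kP x) * (?kQ x - ?kP x)) = S Q - S P"
    proof -
      have "fa_integral \<Omega> m (\<lambda>x. (?kQ x - ?kP x) * (?kQ x - ?kP x)) =
            fa_integral \<Omega> m (\<lambda>x. (?kQ x * ?kQ x - 2 * (?kP x * ?kQ x)) + ?kP x * ?kP x)"
        by (rule int_cong) (simp add: algebra_simps)
      also have "\<dots> = fa_integral \<Omega> m (\<lambda>x. ?kQ x * ?kQ x - 2 * (?kP x * ?kQ x)) + fa_integral \<Omega> m (\<lambda>x. ?kP x * ?kP x)"
        by (rule int_add[OF fm s3 sPP])
      also have "fa_integral \<Omega> m (\<lambda>x. ?kQ x * ?kQ x - 2 * (?kP x * ?kQ x)) =
                 fa_integral \<Omega> m (\<lambda>x. ?kQ x * ?kQ x) - fa_integral \<Omega> m (\<lambda>x. 2 * (?kP x * ?kQ x))"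
        by (rule int_diff[OF fm sQQ s2PQ])
      also have "fa_integral \<Omega> m (\<lambda>x. 2 * (?kP x * ?kQ x)) = 2 * S P"
        using int_cmul[OF fm sPQ] cross by simp
      finally show ?thesis unfolding S_def by simp
    qed
    have "S Q \<le> Sup SS" using SSb Q unfolding SS_def by (intro cSup_upper) auto
    then have sqd: "fa_integral \<Omega> m (\<lambda>x. (?kQ x - ?kP x) * (?kQ x - ?kP x)) \<le> \<delta>"
      using sq s P by linarith
    let ?d = "\<lambda>x. (?kQ x - ?kP x) * (?kQ x - ?kP x)"
    have sd: "simple_fun \<Omega> M ?d" using simple_comb[OF sQ sP] .
    have sabs: "simple_fun \<Omega> M (\<lambda>x. \<bar>?kQ x - ?kP x\<bar>)" using simple_comb[OF sQ sP] .
    have sdt: "simple_fun \<Omega> M (\<lambda>x. (1 / t) * ?d x)" using simple_comb1[OF sd] .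
    have sup: "simple_fun \<Omega> M (\<lambda>x. t + (1 / t) * ?d x)" using simple_comb1[OF sdt] .
    have "fa_integral \<Omega> m (\<lambda>x. \<bar>?kQ x - ?kP x\<bar>) \<le> fa_integral \<Omega> m (\<lambda>x. t + (1 / t) * ?d x)"
      using abs_le_quad[OF t] by (intro int_mono[OF fm pos sabs sup]) auto
    also have "\<dots> = fa_integral \<Omega> m (\<lambda>x. t) + fa_integral \<Omega> m (\<lambda>x. (1 / t) * ?d x)"
      by (rule int_add[OF fm simple_const sdt])
    also have "\<dots> = t * m \<Omega> + (1 / t) * fa_integral \<Omega> m ?d"
      by (simp only: int_const[OF fm] int_cmul[OF fm sd])
    also have "\<dots> \<le> t * m \<Omega> + (1 / t) * \<delta>"
    proof -
      have "(1 / t) * fa_integral \<Omega> m ?d \<le> (1 / t) * \<delta>" using sqd t by (intro mult_left_mono) auto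
      then show ?thesis by simp
    qed
    also have "\<dots> \<le> \<eta>"
    proof -
      have "(1 / t) * \<delta> = \<eta> / 2" unfolding \<delta>_def using t by simp
      moreover have "t * m \<Omega> \<le> \<eta> / 2"
      proof -
        have "t * m \<Omega> = \<eta> / 2 * (m \<Omega> / (m \<Omega> + 1))" unfolding t_def using mO by (simp add: field_simps)
        also have "\<dots> \<le> \<eta> / 2 * 1" using eta mO by (intro mult_left_mono) auto
        finally show ?thesis by simp
      qed
      ultimately show ?thesis by simp
    qed
    finally show "fa_integral \<Omega> m (\<lambda>x. \<bar>?kQ x - ?kP x\<bar>) \<le> \<eta>" .
  qed
qed

end

definition psiphi :: "'a set \<Rightarrow> 'a set set \<Rightarrow> (('a set \<Rightarrow> real) \<Rightarrow> real) \<Rightarrow> ('a set \<Rightarrow> real) \<Rightarrow> 'a set \<Rightarrow> real" where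
  "psiphi \<Omega> M \<phi> m = (\<lambda>E. if E \<in> M then \<phi> (dens \<Omega> M m (indicator E)) else 0)"

context algebra begin

lemma sum_ind_val: assumes P: "part \<Omega> M P" and B: "B \<in> P" and x: "x \<in> B"
  shows "(\<Sum>C\<in>P. a C * indicator C x) = (a B :: real)"
  using kf_val[OF P B x, of "a" "\<lambda>_. 1"] unfolding kf_def by simp

lemma ba_sum: "finite S \<Longrightarrow> (\<And>i. i \<in> S \<Longrightarrow> \<nu> i \<in> ba \<Omega> M) \<Longrightarrow> (\<lambda>E. \<Sum>i\<in>S. c i * \<nu> i E) \<in> ba \<Omega> M"
proof (induction S rule: finite_induct)
  case empty then show ?case using ba_0 by simp
next
  case (insert a S)
  have "(\<lambda>E. c a * \<nu> a E + (\<Sum>i\<in>S. c i * \<nu> i E)) \<in> ba \<Omega> M"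
    using ba_add[OF ba_cmul[of "\<nu> a" "c a"]] insert by simp
  then show ?case using insert by simp
qed

lemma lin_add: "linear_on_ba \<Omega> M \<phi> \<Longrightarrow> \<mu> \<in> ba \<Omega> M \<Longrightarrow> \<nu> \<in> ba \<Omega> M \<Longrightarrow> \<phi> (\<lambda>E. \<mu> E + \<nu> E) = \<phi> \<mu> + \<phi> \<nu>"
  unfolding linear_on_ba_def by auto
lemma lin_cmul: "linear_on_ba \<Omega> M \<phi> \<Longrightarrow> \<mu> \<in> ba \<Omega> M \<Longrightarrow> \<phi> (\<lambda>E. c * \<mu> E) = c * \<phi> \<mu>"
  unfolding linear_on_ba_def by auto
lemma lin_zero: assumes "linear_on_ba \<Omega> M \<phi>" shows "\<phi> (\<lambda>E. 0) = 0"
  using lin_cmul[OF assms ba_0, of 0] by simp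

lemma lin_sum: assumes lin: "linear_on_ba \<Omega> M \<phi>"
  shows "finite S \<Longrightarrow> (\<And>i. i \<in> S \<Longrightarrow> \<nu> i \<in> ba \<Omega> M) \<Longrightarrow> \<phi> (\<lambda>E. \<Sum>i\<in>S. c i * \<nu> i E) = (\<Sum>i\<in>S. c i * \<phi> (\<nu> i))"
proof (induction S rule: finite_induct)
  case empty then show ?case using lin_zero[OF lin] by simp
next
  case (insert a S)
  have b1: "(\<lambda>E. c a * \<nu> a E) \<in> ba \<Omega> M" using ba_cmul insert by simp
  have "\<And>i. i \<in> S \<Longrightarrow> \<nu> i \<in> ba \<Omega> M" using insert.prems by auto
  then have b2: "(\<lambda>E. \<Sum>i\<in>S. c i * \<nu> i E) \<in> ba \<Omega> M" using ba_sum[OF insert.hyps(1)] by blast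
  have "\<phi> (\<lambda>E. \<Sum>i\<in>insert a S. c i * \<nu> i E) = \<phi> (\<lambda>E. c a * \<nu> a E + (\<Sum>i\<in>S. c i * \<nu> i E))"
    using insert by simp
  also have "\<dots> = \<phi> (\<lambda>E. c a * \<nu> a E) + \<phi> (\<lambda>E. \<Sum>i\<in>S. c i * \<nu> i E)"
    using lin_add[OF lin b1 b2] by simp
  also have "\<dots> = c a * \<phi> (\<nu> a) + (\<Sum>i\<in>S. c i * \<phi> (\<nu> i))"
    using lin_cmul[OF lin, of "\<nu> a"] insert by simp
  finally show ?case using insert by simp
qed

lemma dens_add:
  assumes fm: "fin_additive M m" and h1: "simple_fun \<Omega> M h1" and h2: "simple_fun \<Omega> M h2"
  shows "dens \<Omega> M m (\<lambda>x. h1 x + h2 x) = (\<lambda>E. dens \<Omega> M m h1 E + dens \<Omega> M m h2 E)"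
proof
  fix E show "dens \<Omega> M m (\<lambda>x. h1 x + h2 x) E = dens \<Omega> M m h1 E + dens \<Omega> M m h2 E"
  proof (cases "E \<in> M")
    case False then show ?thesis unfolding dens_def by simp
  next
    case E: True
    have "fa_integral \<Omega> m (\<lambda>x. indicator E x * (h1 x + h2 x)) = fa_integral \<Omega> m (\<lambda>x. indicator E x * h1 x + indicator E x * h2 x)"
      by (simp add: algebra_simps)
    also have "\<dots> = fa_integral \<Omega> m (\<lambda>x. indicator E x * h1 x) + fa_integral \<Omega> m (\<lambda>x. indicator E x * h2 x)"
      by (rule int_add[OF fm simple_comb[OF simple_ind[OF E] h1] simple_comb[OF simple_ind[OF E] h2]])
    finally show ?thesis unfolding dens_def using E by simp
  qed
qed

lemma dens_ind_posm: assumes p: "posm \<Omega> M m" and E: "E \<in> M"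
  shows "posm \<Omega> M (dens \<Omega> M m (indicator E))" "dens \<Omega> M m (indicator E) \<Omega> = m E"
proof -
  have fm: "fin_additive M m" using p ba_fa unfolding posm_def by auto
  have "dens \<Omega> M m (indicator E) \<in> ba \<Omega> M"
    using dens_ba(1)[OF p simple_ind[OF E], of 1] by (simp add: indicator_def)
  moreover have "\<forall>X\<in>M. 0 \<le> dens \<Omega> M m (indicator E) X"
    using dens_ind[OF fm E] p Int[OF _ E] unfolding posm_def by auto
  ultimately show "posm \<Omega> M (dens \<Omega> M m (indicator E))" unfolding posm_def by auto
  show "dens \<Omega> M m (indicator E) \<Omega> = m E" using dens_ind[OF fm E top] sets_into_space E by (simp add: Int_absorb1)
qed

lemma psiphi_fa: assumes lin: "linear_on_ba \<Omega> M \<phi>" and p: "posm \<Omega> M m"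
  shows "fin_additive M (psiphi \<Omega> M \<phi> m)"
  unfolding fin_additive_def
proof (intro ballI impI)
  have fm: "fin_additive M m" using p ba_fa unfolding posm_def by auto
  fix E F assume E: "E \<in> M" and F: "F \<in> M" and d: "E \<inter> F = {}"
  have "dens \<Omega> M m (indicator (E \<union> F)) = dens \<Omega> M m (\<lambda>x. indicator E x + indicator F x)"
    using d by (intro dens_cong) (auto simp: indicator_def)
  also have "\<dots> = (\<lambda>X. dens \<Omega> M m (indicator E) X + dens \<Omega> M m (indicator F) X)"
    by (rule dens_add[OF fm simple_ind[OF E] simple_ind[OF F]])
  finally have "\<phi> (dens \<Omega> M m (indicator (E \<union> F))) = \<phi> (dens \<Omega> M m (indicator E)) + \<phi> (dens \<Omega> M m (indicator F))"
    using lin_add[OF lin] dens_ind_posm(1)[OF p E] dens_ind_posm(1)[OF p F] unfolding posm_def by simp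
  then show "psiphi \<Omega> M \<phi> m (E \<union> F) = psiphi \<Omega> M \<phi> m E + psiphi \<Omega> M \<phi> m F"
    unfolding psiphi_def using E F by auto
qed

lemma psiphi_le:
  assumes Kb: "\<And>\<nu>. \<nu> \<in> ba \<Omega> M \<Longrightarrow> \<bar>\<phi> \<nu>\<bar> \<le> K * tot_var M \<nu> \<Omega>" and K: "0 \<le> K"
    and p: "posm \<Omega> M m" and E: "E \<in> M"
  shows "\<bar>psiphi \<Omega> M \<phi> m E\<bar> \<le> K * m E"
proof -
  let ?\<nu> = "dens \<Omega> M m (indicator E)"
  have pn: "posm \<Omega> M ?\<nu>" by (rule dens_ind_posm(1)[OF p E])
  have nb: "?\<nu> \<in> ba \<Omega> M" using pn unfolding posm_def by auto
  have "tot_var M ?\<nu> \<Omega> \<le> ?\<nu> \<Omega>"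
    using dom_ba(2)[OF ba_fa[OF nb] ba_zero[OF nb] pn] pn unfolding posm_def by auto
  then have "tot_var M ?\<nu> \<Omega> \<le> m E" using dens_ind_posm(2)[OF p E] by simp
  then have "\<bar>\<phi> ?\<nu>\<bar> \<le> K * m E" using Kb[OF nb] K by (meson mult_left_mono order_trans)
  then show ?thesis unfolding psiphi_def using E by simp
qed

lemma phi_dens:
  assumes lin: "linear_on_ba \<Omega> M \<phi>" and p: "posm \<Omega> M m" and g: "simple_fun \<Omega> M g"
  shows "\<phi> (dens \<Omega> M m g) = fa_integral \<Omega> (psiphi \<Omega> M \<phi> m) g"
proof -
  have fm: "fin_additive M m" using p ba_fa unfolding posm_def by auto
  let ?Q = "lev \<Omega> g"
  have Q: "part \<Omega> M ?Q" "cb ?Q g" using simple_lev[OF g] by auto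
  have fQ: "finite ?Q" using Q(1) unfolding part_def by auto
  have "dens \<Omega> M m g = dens \<Omega> M m (\<lambda>x. \<Sum>D\<in>?Q. g (rep D) * indicator D x)"
  proof (rule dens_cong)
    fix x assume x: "x \<in> \<Omega>"
    then obtain D where D: "D \<in> ?Q" "x \<in> D" using part_cover[OF Q(1)] by auto
    show "g x = (\<Sum>D\<in>?Q. g (rep D) * indicator D x)"
      using sum_ind_val[OF Q(1) D, of "\<lambda>D. g (rep D)"] cb_val[OF Q D] by simp
  qed
  also have "\<dots> = (\<lambda>E. \<Sum>D\<in>?Q. g (rep D) * dens \<Omega> M m (indicator D) E)"
    using dens_sum[OF fm fQ, of indicator "\<lambda>D. g (rep D)"] simple_ind part_sets[OF Q(1)] by auto
  finally have "\<phi> (dens \<Omega> M m g) = (\<Sum>D\<in>?Q. g (rep D) * \<phi> (dens \<Omega> M m (indicator D)))"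
    using lin_sum[OF lin fQ, of "\<lambda>D. dens \<Omega> M m (indicator D)" "\<lambda>D. g (rep D)"]
      dens_ind_posm(1)[OF p] part_sets[OF Q(1)] unfolding posm_def by auto
  also have "\<dots> = (\<Sum>D\<in>?Q. g (rep D) * psiphi \<Omega> M \<phi> m D)"
    unfolding psiphi_def using part_sets[OF Q(1)] by (intro sum.cong) auto
  also have "\<dots> = fa_integral \<Omega> (psiphi \<Omega> M \<phi> m) g"
    using int_part[OF psiphi_fa[OF lin p] Q] by simp
  finally show ?thesis .
qed

lemma int_abs_le:
  assumes p: "posm \<Omega> M m" and u: "simple_fun \<Omega> M u"
  shows "\<bar>fa_integral \<Omega> m u\<bar> \<le> fa_integral \<Omega> m (\<lambda>x. \<bar>u x\<bar>)"
proof -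
  have fm: "fin_additive M m" using p ba_fa unfolding posm_def by auto
  have pos: "\<And>E. E \<in> M \<Longrightarrow> 0 \<le> m E" using p unfolding posm_def by auto
  have sa: "simple_fun \<Omega> M (\<lambda>x. \<bar>u x\<bar>)" using simple_comb1[OF u] .
  have sm: "simple_fun \<Omega> M (\<lambda>x. - u x)" using simple_comb1[OF u] .
  have "fa_integral \<Omega> m u \<le> fa_integral \<Omega> m (\<lambda>x. \<bar>u x\<bar>)" by (rule int_mono[OF fm _ u sa]) (auto intro: pos)
  moreover have "fa_integral \<Omega> m (\<lambda>x. - u x) \<le> fa_integral \<Omega> m (\<lambda>x. \<bar>u x\<bar>)" by (rule int_mono[OF fm _ sm sa]) (auto intro: pos)
  moreover have "fa_integral \<Omega> m (\<lambda>x. - u x) = - fa_integral \<Omega> m u" using int_cmul[OF fm u, of "-1"] by simp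
  ultimately show ?thesis by linarith
qed

end

context algebra begin

lemma approx:
  assumes lin: "linear_on_ba \<Omega> M \<phi>"
    and Kb: "\<And>\<nu>. \<nu> \<in> ba \<Omega> M \<Longrightarrow> \<bar>\<phi> \<nu>\<bar> \<le> K * tot_var M \<nu> \<Omega>" and K: "0 \<le> K"
    and p: "posm \<Omega> M m" and eps: "0 < \<epsilon>"
  shows "\<exists>f. simple_fun \<Omega> M f \<and> (\<forall>x\<in>\<Omega>. \<bar>f x\<bar> \<le> K) \<and>
           (\<forall>\<rho>\<in>ba \<Omega> M. (\<forall>E\<in>M. \<bar>\<rho> E\<bar> \<le> m E) \<longrightarrow> \<bar>\<phi> \<rho> - fa_integral \<Omega> \<rho> f\<bar> \<le> \<epsilon>)"
proof -
  have fm: "fin_additive M m" using p ba_fa unfolding posm_def by auto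
  have pos: "\<And>E. E \<in> M \<Longrightarrow> 0 \<le> m E" using p unfolding posm_def by auto
  define \<eta> where "\<eta> = \<epsilon> / (1 + 4 * K)"
  have eta: "0 < \<eta>" unfolding \<eta>_def using eps K by simp
  have e1: "\<eta> * (1 + 4 * K) = \<epsilon>" unfolding \<eta>_def using K by simp
  have e2: "\<eta> + K * (2 * \<eta>) + K * (2 * \<eta>) = \<eta> * (1 + 4 * K)" by (simp add: algebra_simps)
  have eta_eq: "\<eta> + K * (2 * \<eta>) + K * (2 * \<eta>) = \<epsilon>" using e1 e2 by simp
  let ?\<psi> = "psiphi \<Omega> M \<phi> m"
  have f\<psi>: "fin_additive M ?\<psi>" by (rule psiphi_fa[OF lin p])
  have le\<psi>: "\<And>E. E \<in> M \<Longrightarrow> \<bar>?\<psi> E\<bar> \<le> K * m E" by (rule psiphi_le[OF Kb K p])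
  obtain P where P: "part \<Omega> M P"
    and Pb: "\<And>Q. part \<Omega> M Q \<Longrightarrow> refines Q P \<Longrightarrow> fa_integral \<Omega> m (\<lambda>x. \<bar>kf ?\<psi> m Q x - kf ?\<psi> m P x\<bar>) \<le> \<eta>"
    using mart[OF p f\<psi> K le\<psi> eta] by blast
  define f where "f = kf ?\<psi> m P"
  have sf: "simple_fun \<Omega> M f" unfolding f_def by (rule kf_simple[OF P])
  have fb: "\<And>x. x \<in> \<Omega> \<Longrightarrow> \<bar>f x\<bar> \<le> K" unfolding f_def by (rule kf_bound[OF P K pos le\<psi>])
  have snf: "sup_norm \<Omega> f \<le> K" by (rule sup_norm_le[OF K fb])
  show ?thesis
  proof (intro exI[of _ f] conjI ballI impI)
    show "simple_fun \<Omega> M f" by (rule sf)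
    show "\<And>x. x \<in> \<Omega> \<Longrightarrow> \<bar>f x\<bar> \<le> K" by (rule fb)
    fix \<rho> assume rb: "\<rho> \<in> ba \<Omega> M" and dom: "\<forall>E\<in>M. \<bar>\<rho> E\<bar> \<le> m E"
    have f\<rho>: "fin_additive M \<rho>" by (rule ba_fa[OF rb])
    have le\<rho>: "\<And>E. E \<in> M \<Longrightarrow> \<bar>\<rho> E\<bar> \<le> 1 * m E" using dom by simp
    have one: "(0::real) \<le> 1" by simp
    obtain Q0 where Q0: "part \<Omega> M Q0"
      and Q0b: "\<And>Q. part \<Omega> M Q \<Longrightarrow> refines Q Q0 \<Longrightarrow> fa_integral \<Omega> m (\<lambda>x. \<bar>kf \<rho> m Q x - kf \<rho> m Q0 x\<bar>) \<le> \<eta>"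
      using mart[OF p f\<rho> one le\<rho> eta] by blast
    define Q where "Q = meet P Q0"
    have Q: "part \<Omega> M Q" unfolding Q_def by (rule part_meet[OF P Q0])
    have QP: "refines Q P" unfolding Q_def by (rule refines_meet1)
    have QQ0: "refines Q Q0" unfolding Q_def by (rule refines_meet2)
    define h where "h = kf \<rho> m Q"
    have sh: "simple_fun \<Omega> M h" unfolding h_def by (rule kf_simple[OF Q])
    have hb: "\<And>x. x \<in> \<Omega> \<Longrightarrow> \<bar>h x\<bar> \<le> 1" unfolding h_def by (rule kf_bound[OF Q one pos le\<rho>])
    define \<rho>Q where "\<rho>Q = dens \<Omega> M m h"
    have bQ: "\<rho>Q \<in> ba \<Omega> M" unfolding \<rho>Q_def by (rule dens_ba(1)[OF p sh hb one])
    define e where "e = (\<lambda>E. \<rho> E - \<rho>Q E)"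
    have be: "e \<in> ba \<Omega> M" unfolding e_def by (rule ba_diff[OF rb bQ])
    have eq1: "\<rho> = (\<lambda>E. \<rho>Q E + e E)" unfolding e_def by simp
    have phi_split: "\<phi> \<rho> = \<phi> \<rho>Q + \<phi> e"
      using lin_add[OF lin bQ be] eq1 by simp
    have int_split: "fa_integral \<Omega> \<rho> f = fa_integral \<Omega> \<rho>Q f + fa_integral \<Omega> e f"
      using int_meas_add[of \<rho>Q e f] eq1 by simp
    have c1: "\<phi> \<rho>Q = fa_integral \<Omega> m (\<lambda>x. h x * kf ?\<psi> m Q x)"
      unfolding \<rho>Q_def phi_dens[OF lin p sh]
      using kf_id[OF fm f\<psi> K le\<psi> Q, of h] kf_cb[OF Q] unfolding h_def by simp
    have c2: "fa_integral \<Omega> \<rho>Q f = fa_integral \<Omega> m (\<lambda>x. f x * h x)"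
      unfolding \<rho>Q_def by (rule dens_int[OF fm sh sf])
    have skQ: "simple_fun \<Omega> M (kf ?\<psi> m Q)" by (rule kf_simple[OF Q])
    have s1: "simple_fun \<Omega> M (\<lambda>x. h x * kf ?\<psi> m Q x)" using simple_comb[OF sh skQ] .
    have s2: "simple_fun \<Omega> M (\<lambda>x. f x * h x)" using simple_comb[OF sf sh] .
    have s12: "simple_fun \<Omega> M (\<lambda>x. h x * kf ?\<psi> m Q x - f x * h x)" using simple_comb[OF s1 s2] .
    have sabs: "simple_fun \<Omega> M (\<lambda>x. \<bar>kf ?\<psi> m Q x - f x\<bar>)" using simple_comb[OF skQ sf] .
    have main: "\<bar>\<phi> \<rho>Q - fa_integral \<Omega> \<rho>Q f\<bar> \<le> \<eta>"
    proof -
      have "\<phi> \<rho>Q - fa_integral \<Omega> \<rho>Q f = fa_integral \<Omega> m (\<lambda>x. h x * kf ?\<psi> m Q x - f x * h x)"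
        unfolding c1 c2 by (rule int_diff[OF fm s1 s2, symmetric])
      then have "\<bar>\<phi> \<rho>Q - fa_integral \<Omega> \<rho>Q f\<bar> \<le> fa_integral \<Omega> m (\<lambda>x. \<bar>h x * kf ?\<psi> m Q x - f x * h x\<bar>)"
        using int_abs_le[OF p s12] by simp
      also have "\<dots> \<le> fa_integral \<Omega> m (\<lambda>x. \<bar>kf ?\<psi> m Q x - f x\<bar>)"
      proof (rule int_mono[OF fm _ simple_comb1[OF s12] sabs])
        show "\<And>E. E \<in> M \<Longrightarrow> 0 \<le> m E" by (rule pos)
        fix x assume x: "x \<in> \<Omega>"
        have "\<bar>h x * kf ?\<psi> m Q x - f x * h x\<bar> = \<bar>h x\<bar> * \<bar>kf ?\<psi> m Q x - f x\<bar>"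
          by (simp add: abs_mult[symmetric] algebra_simps)
        also have "\<dots> \<le> 1 * \<bar>kf ?\<psi> m Q x - f x\<bar>" using hb[OF x] by (intro mult_right_mono) auto
        finally show "\<bar>h x * kf ?\<psi> m Q x - f x * h x\<bar> \<le> \<bar>kf ?\<psi> m Q x - f x\<bar>" by simp
      qed
      also have "\<dots> \<le> \<eta>" using Pb[OF Q QP] unfolding f_def .
      finally show ?thesis .
    qed
    have enorm: "tot_var M e \<Omega> \<le> 2 * \<eta>"
    proof (rule tv_least[OF top])
      fix R assume R0: "finite R" "R \<subseteq> M" "disjoint R" "\<Union>R = \<Omega>"
      have R: "part \<Omega> M R" using R0 unfolding part_def by auto
      define Q' where "Q' = meet Q R"
      have Q': "part \<Omega> M Q'" unfolding Q'_def by (rule part_meet[OF Q R])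
      have Q'Q: "refines Q' Q" unfolding Q'_def by (rule refines_meet1)
      have Q'R: "refines Q' R" unfolding Q'_def by (rule refines_meet2)
      have Q'Q0: "refines Q' Q0" using refines_trans[OF Q'Q QQ0] .
      define h' where "h' = kf \<rho> m Q'"
      define k0 where "k0 = kf \<rho> m Q0"
      have sh': "simple_fun \<Omega> M h'" unfolding h'_def by (rule kf_simple[OF Q'])
      have sk0: "simple_fun \<Omega> M k0" unfolding k0_def by (rule kf_simple[OF Q0])
      have sd: "simple_fun \<Omega> M (\<lambda>x. \<bar>h' x - h x\<bar>)" using simple_comb[OF sh' sh] .
      have eC: "\<bar>e C\<bar> \<le> fa_integral \<Omega> m (\<lambda>x. indicator C x * \<bar>h' x - h x\<bar>)" if C: "C \<in> R" for C
      proof -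
        have CM: "C \<in> M" using R0 C by auto
        have si: "simple_fun \<Omega> M (indicator C)" by (rule simple_ind[OF CM])
        have sa: "simple_fun \<Omega> M (\<lambda>x. indicator C x * h' x)" using simple_comb[OF si sh'] .
        have sb: "simple_fun \<Omega> M (\<lambda>x. indicator C x * h x)" using simple_comb[OF si sh] .
        have cbC: "cb Q' (indicator C)" using cb_refines[OF cb_ind[OF R C] Q'R] .
        have "\<rho> C = fa_integral \<Omega> \<rho> (indicator C)" using int_ind[OF f\<rho> CM] by simp
        also have "\<dots> = fa_integral \<Omega> m (\<lambda>x. indicator C x * h' x)"
          unfolding h'_def using kf_id[OF fm f\<rho> one le\<rho> Q' cbC] by simp
        finally have r1: "\<rho> C = fa_integral \<Omega> m (\<lambda>x. indicator C x * h' x)" .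
        have r2: "\<rho>Q C = fa_integral \<Omega> m (\<lambda>x. indicator C x * h x)"
          unfolding \<rho>Q_def dens_def using CM by simp
        have "e C = fa_integral \<Omega> m (\<lambda>x. indicator C x * h' x - indicator C x * h x)"
          unfolding e_def r1 r2 by (rule int_diff[OF fm sa sb, symmetric])
        also have "\<dots> = fa_integral \<Omega> m (\<lambda>x. indicator C x * (h' x - h x))"
          by (rule int_cong) (simp add: algebra_simps)
        finally have "\<bar>e C\<bar> \<le> fa_integral \<Omega> m (\<lambda>x. \<bar>indicator C x * (h' x - h x)\<bar>)"
          using int_abs_le[OF p simple_comb[OF si simple_comb[OF sh' sh]]] by simp
        also have "\<dots> = fa_integral \<Omega> m (\<lambda>x. indicator C x * \<bar>h' x - h x\<bar>)"
          by (rule int_cong) (simp add: abs_mult)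
        finally show ?thesis .
      qed
      have "(\<Sum>C\<in>R. \<bar>e C\<bar>) \<le> (\<Sum>C\<in>R. fa_integral \<Omega> m (\<lambda>x. indicator C x * \<bar>h' x - h x\<bar>))"
        using eC by (rule sum_mono)
      also have "\<dots> = fa_integral \<Omega> m (\<lambda>x. \<Sum>C\<in>R. indicator C x * \<bar>h' x - h x\<bar>)"
        using R0 simple_comb[OF simple_ind sd] by (intro int_sum[OF fm, symmetric]) auto
      also have "\<dots> = fa_integral \<Omega> m (\<lambda>x. \<bar>h' x - h x\<bar>)"
      proof (rule int_cong)
        fix x assume x: "x \<in> \<Omega>"
        then obtain C where C: "C \<in> R" "x \<in> C" using part_cover[OF R] by auto
        have "(\<Sum>C\<in>R. indicator C x * \<bar>h' x - h x\<bar>) = (\<Sum>C\<in>R. (\<lambda>_. \<bar>h' x - h x\<bar>) C * indicator C x)"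
          by (simp add: mult.commute)
        also have "\<dots> = \<bar>h' x - h x\<bar>" by (rule sum_ind_val[OF R C])
        finally show "(\<Sum>C\<in>R. indicator C x * \<bar>h' x - h x\<bar>) = \<bar>h' x - h x\<bar>" .
      qed
      also have "\<dots> \<le> fa_integral \<Omega> m (\<lambda>x. \<bar>h' x - k0 x\<bar> + \<bar>h x - k0 x\<bar>)"
        by (rule int_mono[OF fm _ sd simple_comb[OF simple_comb[OF sh' sk0] simple_comb[OF sh sk0]]]) (auto intro: pos)
      also have "\<dots> = fa_integral \<Omega> m (\<lambda>x. \<bar>h' x - k0 x\<bar>) + fa_integral \<Omega> m (\<lambda>x. \<bar>h x - k0 x\<bar>)"
        by (rule int_add[OF fm simple_comb[OF sh' sk0] simple_comb[OF sh sk0]])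
      also have "\<dots> \<le> \<eta> + \<eta>"
        using Q0b[OF Q' Q'Q0] Q0b[OF Q QQ0] unfolding h'_def h_def k0_def by (intro add_mono)
      finally show "(\<Sum>C\<in>R. \<bar>e C\<bar>) \<le> 2 * \<eta>" by simp
    qed
    have en0: "0 \<le> tot_var M e \<Omega>" by (rule norm_nonneg[OF be])
    have pe: "\<bar>\<phi> e\<bar> \<le> K * (2 * \<eta>)"
      using Kb[OF be] enorm K by (meson mult_left_mono order_trans)
    have ie: "\<bar>fa_integral \<Omega> e f\<bar> \<le> K * (2 * \<eta>)"
    proof -
      have "\<bar>fa_integral \<Omega> e f\<bar> \<le> sup_norm \<Omega> f * tot_var M e \<Omega>" by (rule int_bound[OF be sf])
      also have "\<dots> \<le> K * (2 * \<eta>)" using snf enorm en0 sup_norm_nonneg[OF sf] by (intro mult_mono) auto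
      finally show ?thesis .
    qed
    have "\<bar>\<phi> \<rho> - fa_integral \<Omega> \<rho> f\<bar> = \<bar>(\<phi> \<rho>Q - fa_integral \<Omega> \<rho>Q f) + (\<phi> e - fa_integral \<Omega> e f)\<bar>"
      unfolding phi_split int_split by (simp add: algebra_simps)
    also have "\<dots> \<le> \<eta> + K * (2 * \<eta>) + K * (2 * \<eta>)"
      using main pe ie by linarith
    finally show "\<bar>\<phi> \<rho> - fa_integral \<Omega> \<rho> f\<bar> \<le> \<epsilon>" using eta_eq by simp
  qed
qed

end

lemma directed_parts:
  assumes d: "directed_set I le"
  shows "I \<noteq> {}" "\<And>a. a \<in> I \<Longrightarrow> le a a"
    "\<And>a b c. a \<in> I \<Longrightarrow> b \<in> I \<Longrightarrow> c \<in> I \<Longrightarrow> le a b \<Longrightarrow> le b c \<Longrightarrow> le a c"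
    "\<And>a b. a \<in> I \<Longrightarrow> b \<in> I \<Longrightarrow> \<exists>c\<in>I. le a c \<and> le b c"
proof -
  note dd = d[unfolded directed_set_def]
  show "I \<noteq> {}" using dd by (rule conjunct1)
  have r: "\<forall>a\<in>I. le a a" using dd by (elim conjE)
  show "\<And>a. a \<in> I \<Longrightarrow> le a a" by (rule r[rule_format])
  have t: "\<forall>a\<in>I. \<forall>b\<in>I. \<forall>c\<in>I. le a b \<longrightarrow> le b c \<longrightarrow> le a c" using dd by (elim conjE)
  show "\<And>a b c. a \<in> I \<Longrightarrow> b \<in> I \<Longrightarrow> c \<in> I \<Longrightarrow> le a b \<Longrightarrow> le b c \<Longrightarrow> le a c"
    by (rule t[rule_format])
  have u: "\<forall>a\<in>I. \<forall>b\<in>I. \<exists>c\<in>I. le a c \<and> le b c" using dd by (elim conjE)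
  show "\<And>a b. a \<in> I \<Longrightarrow> b \<in> I \<Longrightarrow> \<exists>c\<in>I. le a c \<and> le b c" by (rule u[rule_format])
qed

lemma ev_net:
  assumes d: "directed_set I le"
  shows "eventually P (net_filter I le) \<longleftrightarrow> (\<exists>a\<in>I. \<forall>b\<in>I. le a b \<longrightarrow> P b)"
proof -
  note dp = directed_parts[OF d]
  have "eventually P (net_filter I le) \<longleftrightarrow> (\<exists>a\<in>I. eventually P (principal {b\<in>I. le a b}))"
    unfolding net_filter_def
  proof (rule eventually_INF_base[OF dp(1)])
    fix a b assume a: "a \<in> I" and b: "b \<in> I"
    obtain c where c: "c \<in> I" "le a c" "le b c" using dp(4)[OF a b] by auto
    have "{x\<in>I. le c x} \<subseteq> {x\<in>I. le a x} \<inter> {x\<in>I. le b x}"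
    proof
      fix x assume "x \<in> {x\<in>I. le c x}"
      then have x: "x \<in> I" "le c x" by auto
      have "le a x" by (rule dp(3)[OF a c(1) x(1) c(2) x(2)])
      moreover have "le b x" by (rule dp(3)[OF b c(1) x(1) c(3) x(2)])
      ultimately show "x \<in> {x\<in>I. le a x} \<inter> {x\<in>I. le b x}" using x by simp
    qed
    then have "principal {y\<in>I. le c y} \<le> inf (principal {y\<in>I. le a y}) (principal {y\<in>I. le b y})"
      by simp
    then show "\<exists>x\<in>I. principal {y\<in>I. le x y} \<le> inf (principal {y\<in>I. le a y}) (principal {y\<in>I. le b y})"
      by (rule bexI[OF _ c(1)])
  qed
  then show ?thesis by (auto simp: eventually_principal)
qed

lemma net_nontriv: assumes d: "directed_set I le" shows "net_filter I le \<noteq> bot"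
proof
  assume "net_filter I le = bot"
  then have "eventually (\<lambda>x. False) (net_filter I le)" by simp
  then have "\<exists>a\<in>I. \<forall>b\<in>I. le a b \<longrightarrow> False" by (simp only: ev_net[OF d])
  then obtain a where a: "a \<in> I" "\<forall>b\<in>I. le a b \<longrightarrow> False" by (elim bexE) simp
  then show False using directed_parts(2)[OF d a(1)] by simp
qed

context algebra begin

lemma norm_0: "tot_var M (\<lambda>E. 0) \<Omega> = 0"
proof (rule antisym)
  show "tot_var M (\<lambda>E. 0) \<Omega> \<le> 0" by (rule tv_least[OF top]) simp
  show "0 \<le> tot_var M (\<lambda>E. 0) \<Omega>" by (rule norm_nonneg[OF ba_0])
qed

lemma fnorm_facts:
  assumes lin: "linear_on_ba \<Omega> M \<phi>" and nc: "norm_continuous_on_ba \<Omega> M \<phi>"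
  defines "S \<equiv> {\<bar>\<phi> \<mu>\<bar> | \<mu>. \<mu> \<in> ba \<Omega> M \<and> ba_norm \<Omega> M \<mu> \<le> 1}"
  shows "S \<noteq> {}" "bdd_above S" "0 \<in> S" "functional_norm \<Omega> M \<phi> = Sup S"
    "0 \<le> functional_norm \<Omega> M \<phi>"
    "\<And>\<nu>. \<nu> \<in> ba \<Omega> M \<Longrightarrow> \<bar>\<phi> \<nu>\<bar> \<le> functional_norm \<Omega> M \<phi> * tot_var M \<nu> \<Omega>"
proof -
  show zS: "0 \<in> S" unfolding S_def ba_norm_def using ba_0 norm_0 lin_zero[OF lin]
    by (auto intro!: exI[of _ "\<lambda>E. 0"])
  then show Sne: "S \<noteq> {}" by auto
  show fn: "functional_norm \<Omega> M \<phi> = Sup S" unfolding functional_norm_def S_def ..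
  have h: "\<forall>\<epsilon>>0. \<exists>\<delta>>0. \<forall>\<nu>\<in>ba \<Omega> M. ba_norm \<Omega> M (\<lambda>E. \<nu> E - 0) < \<delta> \<longrightarrow> \<bar>\<phi> \<nu> - \<phi> (\<lambda>E. 0)\<bar> < \<epsilon>"
    using bspec[OF nc[unfolded norm_continuous_on_ba_def] ba_0] by simp
  have h2: "\<exists>\<delta>>0. \<forall>\<nu>\<in>ba \<Omega> M. ba_norm \<Omega> M (\<lambda>E. \<nu> E - 0) < \<delta> \<longrightarrow> \<bar>\<phi> \<nu> - \<phi> (\<lambda>E. 0)\<bar> < 1"
    using h by simp
  obtain \<delta> where dl: "0 < \<delta>" and dd0: "\<forall>\<nu>\<in>ba \<Omega> M. ba_norm \<Omega> M (\<lambda>E. \<nu> E - 0) < \<delta> \<longrightarrow> \<bar>\<phi> \<nu> - \<phi> (\<lambda>E. 0)\<bar> < 1"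
    using h2 by (elim exE conjE)
  have dd: "\<bar>\<phi> \<nu>\<bar> < 1" if "\<nu> \<in> ba \<Omega> M" "tot_var M \<nu> \<Omega> < \<delta>" for \<nu>
    using dd0 that lin_zero[OF lin] unfolding ba_norm_def by simp
  have bnd: "s \<le> 2 / \<delta>" if s: "s \<in> S" for s
  proof -
    obtain \<mu> where mu: "\<mu> \<in> ba \<Omega> M" "tot_var M \<mu> \<Omega> \<le> 1" "s = \<bar>\<phi> \<mu>\<bar>" using s unfolding S_def ba_norm_def by auto
    let ?\<nu> = "\<lambda>E. (\<delta> / 2) * \<mu> E"
    have nb: "?\<nu> \<in> ba \<Omega> M" by (rule ba_cmul[OF mu(1)])
    have "tot_var M ?\<nu> \<Omega> \<le> \<bar>\<delta> / 2\<bar> * tot_var M \<mu> \<Omega>" by (rule tv_cmul_le[OF mu(1)])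
    also have "\<dots> \<le> \<delta> / 2" using mu(2) dl by (simp add: mult_left_le)
    also have "\<dots> < \<delta>" using dl by simp
    finally have "\<bar>\<phi> ?\<nu>\<bar> < 1" by (rule dd[OF nb])
    moreover have eqn: "\<phi> ?\<nu> = (\<delta> / 2) * \<phi> \<mu>" by (rule lin_cmul[OF lin mu(1)])
    ultimately have "\<bar>(\<delta> / 2) * \<phi> \<mu>\<bar> < 1" by simp
    then have "(\<delta> / 2) * \<bar>\<phi> \<mu>\<bar> < 1" using dl by (simp add: abs_mult)
    then have "\<bar>\<phi> \<mu>\<bar> < 2 / \<delta>" using dl by (simp add: field_simps)
    then show ?thesis using mu(3) by simp
  qed
  show bdd: "bdd_above S" using bnd by (auto simp: bdd_above_def)
  show K0: "0 \<le> functional_norm \<Omega> M \<phi>" unfolding fn using zS bdd by (intro cSup_upper)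
  fix \<nu> assume nu: "\<nu> \<in> ba \<Omega> M"
  show "\<bar>\<phi> \<nu>\<bar> \<le> functional_norm \<Omega> M \<phi> * tot_var M \<nu> \<Omega>"
  proof (cases "tot_var M \<nu> \<Omega> = 0")
    case True
    then have "\<nu> = (\<lambda>E. 0)" by (rule norm_zero[OF nu])
    then show ?thesis using lin_zero[OF lin] K0 True by simp
  next
    case False
    define r where "r = tot_var M \<nu> \<Omega>"
    have r: "0 < r" using False norm_nonneg[OF nu] unfolding r_def by simp
    let ?\<nu> = "\<lambda>E. (1 / r) * \<nu> E"
    have nb: "?\<nu> \<in> ba \<Omega> M" by (rule ba_cmul[OF nu])
    have "tot_var M ?\<nu> \<Omega> \<le> \<bar>1 / r\<bar> * tot_var M \<nu> \<Omega>" by (rule tv_cmul_le[OF nu])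
    also have "\<dots> = 1" using r unfolding r_def by simp
    finally have "\<bar>\<phi> ?\<nu>\<bar> \<in> S" unfolding S_def ba_norm_def using nb by auto
    then have "\<bar>\<phi> ?\<nu>\<bar> \<le> functional_norm \<Omega> M \<phi>" unfolding fn using bdd by (intro cSup_upper)
    moreover have eqn: "\<phi> ?\<nu> = (1 / r) * \<phi> \<nu>" by (rule lin_cmul[OF lin nu])
    ultimately have "\<bar>\<phi> \<nu>\<bar> / r \<le> functional_norm \<Omega> M \<phi>" using r by (simp add: abs_mult)
    then show ?thesis using r unfolding r_def[symmetric] by (simp add: pos_divide_le_eq)
  qed
qed

end

definition jset :: "'a set \<Rightarrow> 'a set set \<Rightarrow> (('a set \<Rightarrow> real) \<times> nat) set" where
  "jset \<Omega> M = {a. posm \<Omega> M (fst a)}"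
definition jle :: "(('a set \<Rightarrow> real) \<times> nat) \<Rightarrow> (('a set \<Rightarrow> real) \<times> nat) \<Rightarrow> bool" where
  "jle a b \<longleftrightarrow> (\<forall>E. fst a E \<le> fst b E) \<and> snd a \<le> snd b"
definition goodf where
  "goodf \<Omega> M \<phi> K a f \<longleftrightarrow> simple_fun \<Omega> M f \<and> (\<forall>x\<in>\<Omega>. \<bar>f x\<bar> \<le> K) \<and>
     (\<forall>\<rho>\<in>ba \<Omega> M. (\<forall>E\<in>M. \<bar>\<rho> E\<bar> \<le> fst a E) \<longrightarrow> \<bar>\<phi> \<rho> - fa_integral \<Omega> \<rho> f\<bar> \<le> inverse (real (Suc (snd a))))"
definition jf where "jf \<Omega> M \<phi> K a = (SOME f. goodf \<Omega> M \<phi> K a f)"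

lemma abs_sgn_real: "\<bar>t::real\<bar> = t * sgn t"
  by (simp add: abs_if sgn_if)

context algebra begin

lemma jf_good:
  assumes lin: "linear_on_ba \<Omega> M \<phi>"
    and Kb: "\<And>\<nu>. \<nu> \<in> ba \<Omega> M \<Longrightarrow> \<bar>\<phi> \<nu>\<bar> \<le> K * tot_var M \<nu> \<Omega>" and K: "0 \<le> K"
    and a: "a \<in> jset \<Omega> M"
  shows "goodf \<Omega> M \<phi> K a (jf \<Omega> M \<phi> K a)"
proof -
  have p: "posm \<Omega> M (fst a)" using a unfolding jset_def by auto
  have "0 < inverse (real (Suc (snd a)))" by simp
  from approx[OF lin Kb K p this] have "\<exists>f. goodf \<Omega> M \<phi> K a f" unfolding goodf_def by blast
  then show ?thesis unfolding jf_def by (rule someI_ex)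
qed

lemma posm_0: "posm \<Omega> M (\<lambda>E. 0)" unfolding posm_def using ba_0 by auto
lemma posm_add: "posm \<Omega> M m \<Longrightarrow> posm \<Omega> M m' \<Longrightarrow> posm \<Omega> M (\<lambda>E. m E + m' E)"
  unfolding posm_def using ba_add by auto

lemma posm_nonneg_all: assumes p: "posm \<Omega> M m" shows "0 \<le> m E"
proof (cases "E \<in> M")
  case True then show ?thesis using p unfolding posm_def by auto
next
  case False
  have "m \<in> ba \<Omega> M" using p unfolding posm_def by auto
  then have "m E = 0" using ba_zero False by auto
  then show ?thesis by simp
qed

lemma jle_trans: assumes ab: "jle a b" and bc: "jle b c" shows "jle a c"
proof -
  have 1: "\<And>E. fst a E \<le> fst b E" "snd a \<le> snd b" using ab unfolding jle_def by auto
  have 2: "\<And>E. fst b E \<le> fst c E" "snd b \<le> snd c" using bc unfolding jle_def by auto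
  have "\<And>E. fst a E \<le> fst c E" using 1(1) 2(1) order_trans by metis
  moreover have "snd a \<le> snd c" using 1(2) 2(2) by simp
  ultimately show ?thesis unfolding jle_def by simp
qed

lemma jdir: "directed_set (jset \<Omega> M) jle"
  unfolding directed_set_def
proof (intro conjI ballI impI)
  show "jset \<Omega> M \<noteq> {}" using posm_0 unfolding jset_def by (auto intro!: exI[of _ "((\<lambda>E. 0), 0)"])
  fix a assume "a \<in> jset \<Omega> M" then show "jle a a" unfolding jle_def by auto
next
  fix a b c assume "jle a b" "jle b c" then show "jle a c" by (rule jle_trans)
next
  fix a b assume a: "a \<in> jset \<Omega> M" and b: "b \<in> jset \<Omega> M"
  let ?c = "((\<lambda>E. fst a E + fst b E), max (snd a) (snd b))"
  have pa: "posm \<Omega> M (fst a)" and pb: "posm \<Omega> M (fst b)" using a b unfolding jset_def by auto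
  have c: "?c \<in> jset \<Omega> M" using posm_add[OF pa pb] unfolding jset_def by simp
  have "jle a ?c" unfolding jle_def using posm_nonneg_all[OF pb] by simp
  moreover have "jle b ?c" unfolding jle_def using posm_nonneg_all[OF pa] by simp
  ultimately show "\<exists>c\<in>jset \<Omega> M. jle a c \<and> jle b c" using c by blast
qed


lemma jgood_apply:
  assumes g: "goodf \<Omega> M \<phi> K a f" and a0: "jle (tvm M \<mu>, N) a" and mu: "\<mu> \<in> ba \<Omega> M"
    and rho: "\<rho> \<in> ba \<Omega> M" and dom: "\<And>E. E \<in> M \<Longrightarrow> \<bar>\<rho> E\<bar> \<le> tvm M \<mu> E"
  shows "\<bar>\<phi> \<rho> - fa_integral \<Omega> \<rho> f\<bar> \<le> inverse (real (Suc N))"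
proof -
  have le1: "\<And>E. tvm M \<mu> E \<le> fst a E" and le2: "N \<le> snd a" using a0 unfolding jle_def by auto
  have "\<forall>E\<in>M. \<bar>\<rho> E\<bar> \<le> fst a E" using dom le1 order_trans by blast
  then have "\<bar>\<phi> \<rho> - fa_integral \<Omega> \<rho> f\<bar> \<le> inverse (real (Suc (snd a)))" using g rho unfolding goodf_def by blast
  also have "\<dots> \<le> inverse (real (Suc N))" using le2 by (simp add: le_imp_inverse_le)
  finally show ?thesis .
qed

lemma jnet:
  assumes lin: "linear_on_ba \<Omega> M \<phi>" and nc: "norm_continuous_on_ba \<Omega> M \<phi>"
  shows "representing_net \<Omega> M \<phi> (jset \<Omega> M) jle (jf \<Omega> M \<phi> (functional_norm \<Omega> M \<phi>))"
proof -
  define K where "K = functional_norm \<Omega> M \<phi>"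
  define S where "S = {\<bar>\<phi> \<mu>\<bar> | \<mu>. \<mu> \<in> ba \<Omega> M \<and> ba_norm \<Omega> M \<mu> \<le> 1}"
  note ff = fnorm_facts[OF lin nc, folded S_def K_def]
  have K: "0 \<le> K" by (rule ff(5))
  have Kb: "\<And>\<nu>. \<nu> \<in> ba \<Omega> M \<Longrightarrow> \<bar>\<phi> \<nu>\<bar> \<le> K * tot_var M \<nu> \<Omega>" by (rule ff(6))
  define F where "F = jf \<Omega> M \<phi> K"
  have good: "\<And>a. a \<in> jset \<Omega> M \<Longrightarrow> goodf \<Omega> M \<phi> K a (F a)" unfolding F_def by (rule jf_good[OF lin Kb K])
  have sF: "\<And>a. a \<in> jset \<Omega> M \<Longrightarrow> simple_fun \<Omega> M (F a)" using good unfolding goodf_def by blast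
  have bF: "\<And>a x. a \<in> jset \<Omega> M \<Longrightarrow> x \<in> \<Omega> \<Longrightarrow> \<bar>F a x\<bar> \<le> K" using good unfolding goodf_def by blast
  have snF: "\<And>a. a \<in> jset \<Omega> M \<Longrightarrow> sup_norm \<Omega> (F a) \<le> K" using sup_norm_le[OF K] bF by blast
  note ev = ev_net[OF jdir]
  have ntriv: "net_filter (jset \<Omega> M) jle \<noteq> bot" by (rule net_nontriv[OF jdir])
  have a0J: "\<And>\<mu> N. \<mu> \<in> ba \<Omega> M \<Longrightarrow> (tvm M \<mu>, N) \<in> jset \<Omega> M" unfolding jset_def using posm_tvm by auto
  have conv: "((\<lambda>a. fa_integral \<Omega> \<mu> (F a)) \<longlongrightarrow> \<phi> \<mu>) (net_filter (jset \<Omega> M) jle)" if mu: "\<mu> \<in> ba \<Omega> M" for \<mu>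
  proof (rule tendstoI)
    fix e :: real assume e: "0 < e"
    obtain N where N: "inverse (real (Suc N)) < e" using reals_Archimedean[OF e] by auto
    have "\<forall>b\<in>jset \<Omega> M. jle (tvm M \<mu>, N) b \<longrightarrow> dist (fa_integral \<Omega> \<mu> (F b)) (\<phi> \<mu>) < e"
    proof (intro ballI impI)
      fix b assume b: "b \<in> jset \<Omega> M" and le: "jle (tvm M \<mu>, N) b"
      have "\<bar>\<phi> \<mu> - fa_integral \<Omega> \<mu> (F b)\<bar> \<le> inverse (real (Suc N))"
        by (rule jgood_apply[OF good[OF b] le mu mu tvm_ge[OF mu]])
      then show "dist (fa_integral \<Omega> \<mu> (F b)) (\<phi> \<mu>) < e" using N by (simp add: dist_real_def abs_minus_commute)
    qed
    then show "eventually (\<lambda>b. dist (fa_integral \<Omega> \<mu> (F b)) (\<phi> \<mu>) < e) (net_filter (jset \<Omega> M) jle)"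
      unfolding ev using a0J[OF mu] by blast
  qed
  have cauchy: "L1_cauchy_net \<Omega> M \<mu> (jset \<Omega> M) jle F" if mu: "\<mu> \<in> ba \<Omega> M" for \<mu>
    unfolding L1_cauchy_net_def
  proof (intro allI impI)
    fix e :: real assume e: "0 < e"
    obtain N where N: "inverse (real (Suc N)) < e / 2" using reals_Archimedean[of "e/2"] e by auto
    have pt: "posm \<Omega> M (tvm M \<mu>)" by (rule posm_tvm[OF mu])
    have ftv: "fin_additive M (tvm M \<mu>)" using pt ba_fa unfolding posm_def by auto
    show "\<exists>a0\<in>jset \<Omega> M. \<forall>a1\<in>jset \<Omega> M. \<forall>a2\<in>jset \<Omega> M. jle a0 a1 \<longrightarrow> jle a0 a2 \<longrightarrow>
            fa_integral \<Omega> (tot_var M \<mu>) (\<lambda>x. \<bar>F a1 x - F a2 x\<bar>) < e"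
    proof (intro bexI[of _ "(tvm M \<mu>, N)"] ballI impI)
      show "(tvm M \<mu>, N) \<in> jset \<Omega> M" by (rule a0J[OF mu])
      fix a1 a2 assume a1: "a1 \<in> jset \<Omega> M" and a2: "a2 \<in> jset \<Omega> M"
        and l1: "jle (tvm M \<mu>, N) a1" and l2: "jle (tvm M \<mu>, N) a2"
      let ?d = "\<lambda>x. F a1 x - F a2 x"
      let ?s = "\<lambda>x. sgn (?d x)"
      have sd: "simple_fun \<Omega> M ?d" using simple_comb[OF sF[OF a1] sF[OF a2]] .
      have ss: "simple_fun \<Omega> M ?s" using simple_comb1[OF sd] .
      have sb: "\<And>x. x \<in> \<Omega> \<Longrightarrow> \<bar>?s x\<bar> \<le> 1" by (simp add: abs_sgn_eq)
      have one: "(0::real) \<le> 1" by simp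
      define \<rho> where "\<rho> = dens \<Omega> M (tvm M \<mu>) ?s"
      have rb: "\<rho> \<in> ba \<Omega> M" unfolding \<rho>_def by (rule dens_ba(1)[OF pt ss sb one])
      have rdom: "\<And>E. E \<in> M \<Longrightarrow> \<bar>\<rho> E\<bar> \<le> tvm M \<mu> E"
        unfolding \<rho>_def using dens_le[OF pt ss sb] by fastforce
      have g1: "\<bar>\<phi> \<rho> - fa_integral \<Omega> \<rho> (F a1)\<bar> \<le> inverse (real (Suc N))"
        by (rule jgood_apply[OF good[OF a1] l1 mu rb rdom])
      have g2: "\<bar>\<phi> \<rho> - fa_integral \<Omega> \<rho> (F a2)\<bar> \<le> inverse (real (Suc N))"
        by (rule jgood_apply[OF good[OF a2] l2 mu rb rdom])
      have "fa_integral \<Omega> (tot_var M \<mu>) (\<lambda>x. \<bar>?d x\<bar>) = fa_integral \<Omega> (tvm M \<mu>) (\<lambda>x. \<bar>?d x\<bar>)"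
        by (rule int_meas_cong[OF simple_comb1[OF sd]]) (simp add: tvm_def)
      also have "\<dots> = fa_integral \<Omega> (tvm M \<mu>) (\<lambda>x. ?d x * ?s x)"
        by (rule int_cong) (rule abs_sgn_real)
      also have "\<dots> = fa_integral \<Omega> \<rho> ?d"
        unfolding \<rho>_def by (rule dens_int[OF ftv ss sd, symmetric])
      also have "\<dots> = fa_integral \<Omega> \<rho> (F a1) - fa_integral \<Omega> \<rho> (F a2)"
        by (rule int_diff[OF ba_fa[OF rb] sF[OF a1] sF[OF a2]])
      also have "\<dots> \<le> 2 * inverse (real (Suc N))" using g1 g2 by linarith
      also have "\<dots> < e" using N by simp
      finally show "fa_integral \<Omega> (tot_var M \<mu>) (\<lambda>x. \<bar>F a1 x - F a2 x\<bar>) < e" .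
    qed
  qed
  have ls_le: "Limsup (net_filter (jset \<Omega> M) jle) (\<lambda>a. ereal (sup_norm \<Omega> (F a))) \<le> ereal K"
  proof (rule Limsup_bounded)
    obtain a0 where "a0 \<in> jset \<Omega> M" using directed_parts(1)[OF jdir] by auto
    moreover have "\<forall>b\<in>jset \<Omega> M. jle a0 b \<longrightarrow> ereal (sup_norm \<Omega> (F b)) \<le> ereal K" using snF by simp
    ultimately show "eventually (\<lambda>a. ereal (sup_norm \<Omega> (F a)) \<le> ereal K) (net_filter (jset \<Omega> M) jle)"
      unfolding ev by blast
  qed
  have ls_ge: "ereal s \<le> Limsup (net_filter (jset \<Omega> M) jle) (\<lambda>a. ereal (sup_norm \<Omega> (F a)))" if s: "s \<in> S" for s
  proof -
    obtain \<mu> where mu: "\<mu> \<in> ba \<Omega> M" "tot_var M \<mu> \<Omega> \<le> 1" "s = \<bar>\<phi> \<mu>\<bar>" using s unfolding S_def ba_norm_def by auto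
    have lim: "((\<lambda>a. ereal \<bar>fa_integral \<Omega> \<mu> (F a)\<bar>) \<longlongrightarrow> ereal \<bar>\<phi> \<mu>\<bar>) (net_filter (jset \<Omega> M) jle)"
      by (intro tendsto_ereal tendsto_rabs conv[OF mu(1)])
    have "Limsup (net_filter (jset \<Omega> M) jle) (\<lambda>a. ereal \<bar>fa_integral \<Omega> \<mu> (F a)\<bar>) = ereal \<bar>\<phi> \<mu>\<bar>"
      by (rule lim_imp_Limsup[OF ntriv lim])
    moreover have "Limsup (net_filter (jset \<Omega> M) jle) (\<lambda>a. ereal \<bar>fa_integral \<Omega> \<mu> (F a)\<bar>)
        \<le> Limsup (net_filter (jset \<Omega> M) jle) (\<lambda>a. ereal (sup_norm \<Omega> (F a)))"
    proof (rule Limsup_mono)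
      obtain a0 where a0: "a0 \<in> jset \<Omega> M" using directed_parts(1)[OF jdir] by auto
      have "\<forall>b\<in>jset \<Omega> M. jle a0 b \<longrightarrow> ereal \<bar>fa_integral \<Omega> \<mu> (F b)\<bar> \<le> ereal (sup_norm \<Omega> (F b))"
      proof (intro ballI impI)
        fix b assume b: "b \<in> jset \<Omega> M"
        have "\<bar>fa_integral \<Omega> \<mu> (F b)\<bar> \<le> sup_norm \<Omega> (F b) * tot_var M \<mu> \<Omega>" by (rule int_bound[OF mu(1) sF[OF b]])
        also have "\<dots> \<le> sup_norm \<Omega> (F b) * 1" using mu(2) sup_norm_nonneg[OF sF[OF b]] by (intro mult_left_mono) auto
        finally show "ereal \<bar>fa_integral \<Omega> \<mu> (F b)\<bar> \<le> ereal (sup_norm \<Omega> (F b))" by simp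
      qed
      then show "eventually (\<lambda>a. ereal \<bar>fa_integral \<Omega> \<mu> (F a)\<bar> \<le> ereal (sup_norm \<Omega> (F a))) (net_filter (jset \<Omega> M) jle)"
        unfolding ev using a0 by blast
    qed
    ultimately show ?thesis using mu(3) by simp
  qed
  have ls: "Limsup (net_filter (jset \<Omega> M) jle) (\<lambda>a. ereal (sup_norm \<Omega> (F a))) = ereal K"
  proof (rule antisym[OF ls_le])
    let ?L = "Limsup (net_filter (jset \<Omega> M) jle) (\<lambda>a. ereal (sup_norm \<Omega> (F a)))"
    show "ereal K \<le> ?L"
    proof (cases ?L)
      case (real r)
      have "Sup S \<le> r"
        using ff(1) ls_ge real by (intro cSup_least) auto
      then have "K \<le> r" using ff(4) by simp
      then show ?thesis using real by simp
    next
      case PInf then show ?thesis by simp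
    next
      case MInf
      then have "ereal 0 \<le> -\<infinity>" using ls_ge[OF ff(3)] by simp
      then show ?thesis by simp
    qed
  qed
  show ?thesis
    unfolding representing_net_def K_def[symmetric] F_def[symmetric]
  proof (intro conjI ballI)
    show "directed_set (jset \<Omega> M) jle" by (rule jdir)
    show "\<And>a. a \<in> jset \<Omega> M \<Longrightarrow> simple_fun \<Omega> M (F a)" by (rule sF)
    show "\<exists>M'. \<forall>a\<in>jset \<Omega> M. sup_norm \<Omega> (F a) \<le> M'" using snF by blast
    show "\<And>\<mu>. \<mu> \<in> ba \<Omega> M \<Longrightarrow> L1_cauchy_net \<Omega> M \<mu> (jset \<Omega> M) jle F" by (rule cauchy)
    show "Limsup (net_filter (jset \<Omega> M) jle) (\<lambda>a. ereal (sup_norm \<Omega> (F a))) = ereal K" by (rule ls)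
    show "\<And>\<mu>. \<mu> \<in> ba \<Omega> M \<Longrightarrow> ((\<lambda>a. fa_integral \<Omega> \<mu> (F a)) \<longlongrightarrow> \<phi> \<mu>) (net_filter (jset \<Omega> M) jle)"
      by (rule conv)
  qed
qed
end

definition hh :: "'a set \<Rightarrow> real \<Rightarrow> 'a \<Rightarrow> real" where
  "hh E r = (\<lambda>x. if x \<in> E then exp r else - exp r)"
definition GG :: "('a set \<Rightarrow> real) \<Rightarrow> ('a \<Rightarrow> real) set" where
  "GG m = (\<lambda>E. hh E (m E)) ` UNIV"
definition enc :: "('a set \<Rightarrow> real) \<times> nat \<Rightarrow> ('a \<Rightarrow> real) \<times> ('a \<Rightarrow> real) set" where
  "enc a = ((\<lambda>x. real (snd a)), GG (fst a))"

lemma hh_inj: assumes h: "hh E r = hh E' r'" shows "E = E'" "r = r'"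
proof -
  have v: "\<And>x. (if x \<in> E then exp r else - exp r) = (if x \<in> E' then exp r' else - exp r')"
    using h unfolding hh_def by metis
  show EE: "E = E'"
  proof (rule set_eqI)
    fix x
    have "0 < exp r" "0 < exp r'" by auto
    then show "x \<in> E \<longleftrightarrow> x \<in> E'" using v[of x] by (cases "x \<in> E"; cases "x \<in> E'") auto
  qed
  have "exp r = exp r'" using v[of undefined] EE by (cases "undefined \<in> E") auto
  then show "r = r'" by simp
qed

lemma GG_inj: assumes g: "GG m = GG m'" shows "m = m'"
proof
  fix E
  have "hh E (m E) \<in> GG m'" using g unfolding GG_def by blast
  then obtain E' where "hh E (m E) = hh E' (m' E')" unfolding GG_def by auto
  then show "m E = m' E" using hh_inj by metis
qed

lemma enc_inj: "inj enc"
proof (rule injI)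
  fix a b assume e: "enc a = enc b"
  have h1: "fst (enc a) = fst (enc b)" using e by simp
  have "real (snd a) = real (snd b)" using fun_cong[OF h1, of undefined] unfolding enc_def by simp
  then have 1: "snd a = snd b" by simp
  have "snd (enc a) = snd (enc b)" using e by simp
  then have "GG (fst a) = GG (fst b)" unfolding enc_def by (simp only: snd_conv)
  then have 2: "fst a = fst b" by (rule GG_inj)
  show "a = b" using 1 2 by (simp add: prod_eq_iff)
qed

lemma transfer_net:
  assumes ig: "inj g" and rn: "representing_net \<Omega> A \<phi> J le F"
  shows "representing_net \<Omega> A \<phi> (g ` J) (\<lambda>a b. le (inv g a) (inv g b)) (\<lambda>a. F (inv g a))"
proof -
  have iv: "\<And>x. inv g (g x) = x" using ig by (simp add: inv_f_f)
  have d: "directed_set J le" using rn unfolding representing_net_def by blast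
  note dp = directed_parts[OF d]
  let ?le = "\<lambda>a b. le (inv g a) (inv g b)"
  have d': "directed_set (g ` J) ?le"
    unfolding directed_set_def
  proof (intro conjI ballI impI)
    show "g ` J \<noteq> {}" using dp(1) by simp
    fix a assume "a \<in> g ` J" then show "?le a a" using dp(2) iv by auto
  next
    fix a b c assume "a \<in> g ` J" "b \<in> g ` J" "c \<in> g ` J" "?le a b" "?le b c"
    then obtain x y z where "x \<in> J" "y \<in> J" "z \<in> J" "a = g x" "b = g y" "c = g z" by auto
    then show "?le a c" using dp(3) iv \<open>?le a b\<close> \<open>?le b c\<close> by metis
  next
    fix a b assume "a \<in> g ` J" "b \<in> g ` J"
    then obtain x y where xy: "x \<in> J" "y \<in> J" "a = g x" "b = g y" by auto
    then obtain z where "z \<in> J" "le x z" "le y z" using dp(4) by blast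
    then show "\<exists>c\<in>g ` J. ?le a c \<and> ?le b c" using xy iv by auto
  qed
  have filt: "net_filter (g ` J) ?le = filtermap g (net_filter J le)"
  proof (rule filter_eq_iff[THEN iffD2], intro allI)
    fix P
    have "eventually P (net_filter (g ` J) ?le) \<longleftrightarrow> (\<exists>a\<in>g ` J. \<forall>b\<in>g ` J. ?le a b \<longrightarrow> P b)"
      by (rule ev_net[OF d'])
    also have "\<dots> \<longleftrightarrow> (\<exists>x\<in>J. \<forall>y\<in>J. le x y \<longrightarrow> P (g y))" using iv by auto
    also have "\<dots> \<longleftrightarrow> eventually (\<lambda>x. P (g x)) (net_filter J le)" by (rule ev_net[OF d, symmetric])
    also have "\<dots> \<longleftrightarrow> eventually P (filtermap g (net_filter J le))" by (simp add: eventually_filtermap)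
    finally show "eventually P (net_filter (g ` J) ?le) = eventually P (filtermap g (net_filter J le))" .
  qed
  show ?thesis
    unfolding representing_net_def
  proof (intro conjI ballI)
    show "directed_set (g ` J) ?le" by (rule d')
    show "\<And>a. a \<in> g ` J \<Longrightarrow> simple_fun \<Omega> A (F (inv g a))"
      using rn iv unfolding representing_net_def by auto
    obtain Mb where "\<forall>a\<in>J. sup_norm \<Omega> (F a) \<le> Mb" using rn unfolding representing_net_def by blast
    then show "\<exists>Mb. \<forall>a\<in>g ` J. sup_norm \<Omega> (F (inv g a)) \<le> Mb" using iv by auto
  next
    fix \<mu> assume mu: "\<mu> \<in> ba \<Omega> A"
    have c: "L1_cauchy_net \<Omega> A \<mu> J le F" using rn mu unfolding representing_net_def by blast
    show "L1_cauchy_net \<Omega> A \<mu> (g ` J) ?le (\<lambda>a. F (inv g a))"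
      unfolding L1_cauchy_net_def
    proof (intro allI impI)
      fix e :: real assume e: "0 < e"
      obtain a0 where a0: "a0 \<in> J" and h: "\<forall>a1\<in>J. \<forall>a2\<in>J. le a0 a1 \<longrightarrow> le a0 a2 \<longrightarrow>
          fa_integral \<Omega> (tot_var A \<mu>) (\<lambda>x. \<bar>F a1 x - F a2 x\<bar>) < e"
        using c e unfolding L1_cauchy_net_def by blast
      show "\<exists>a0\<in>g ` J. \<forall>a1\<in>g ` J. \<forall>a2\<in>g ` J. ?le a0 a1 \<longrightarrow> ?le a0 a2 \<longrightarrow>
          fa_integral \<Omega> (tot_var A \<mu>) (\<lambda>x. \<bar>F (inv g a1) x - F (inv g a2) x\<bar>) < e"
        using a0 h iv by (intro bexI[of _ "g a0"]) auto
    qed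
  next
    fix \<mu> assume mu: "\<mu> \<in> ba \<Omega> A"
    have "((\<lambda>a. fa_integral \<Omega> \<mu> (F a)) \<longlongrightarrow> \<phi> \<mu>) (net_filter J le)" using rn mu unfolding representing_net_def by blast
    then show "((\<lambda>a. fa_integral \<Omega> \<mu> (F (inv g a))) \<longlongrightarrow> \<phi> \<mu>) (net_filter (g ` J) ?le)"
      unfolding filt filterlim_filtermap iv .
  next
    have "Limsup (net_filter J le) (\<lambda>a. ereal (sup_norm \<Omega> (F a))) = ereal (functional_norm \<Omega> A \<phi>)"
      using rn unfolding representing_net_def by blast
    then show "Limsup (net_filter (g ` J) ?le) (\<lambda>a. ereal (sup_norm \<Omega> (F (inv g a)))) = ereal (functional_norm \<Omega> A \<phi>)"
      unfolding filt Limsup_filtermap_eq[OF ig] iv .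
  qed
qed

context algebra begin

lemma rn_cont:
  assumes lin: "linear_on_ba \<Omega> M \<phi>" and rn: "representing_net \<Omega> M \<phi> I le f"
  shows "norm_continuous_on_ba \<Omega> M \<phi>"
proof -
  have d: "directed_set I le" using rn unfolding representing_net_def by blast
  obtain Mb where Mb: "\<forall>a\<in>I. sup_norm \<Omega> (f a) \<le> Mb" using rn unfolding representing_net_def by blast
  have sf: "\<And>a. a \<in> I \<Longrightarrow> simple_fun \<Omega> M (f a)" using rn unfolding representing_net_def by blast
  define B where "B = max Mb 0"
  have B: "0 \<le> B" unfolding B_def by simp
  have ntriv: "\<not> trivial_limit (net_filter I le)" using net_nontriv[OF d] by simp
  obtain a0 where a0: "a0 \<in> I" using directed_parts(1)[OF d] by auto
  have bound: "\<bar>\<phi> \<nu>\<bar> \<le> B * tot_var M \<nu> \<Omega>" if nu: "\<nu> \<in> ba \<Omega> M" for \<nu>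
  proof -
    have lim: "((\<lambda>a. fa_integral \<Omega> \<nu> (f a)) \<longlongrightarrow> \<phi> \<nu>) (net_filter I le)"
      using rn nu unfolding representing_net_def by blast
    have "\<forall>b\<in>I. le a0 b \<longrightarrow> \<bar>fa_integral \<Omega> \<nu> (f b)\<bar> \<le> B * tot_var M \<nu> \<Omega>"
    proof (intro ballI impI)
      fix b assume b: "b \<in> I"
      have "\<bar>fa_integral \<Omega> \<nu> (f b)\<bar> \<le> sup_norm \<Omega> (f b) * tot_var M \<nu> \<Omega>" by (rule int_bound[OF nu sf[OF b]])
      also have "\<dots> \<le> B * tot_var M \<nu> \<Omega>"
        using Mb b norm_nonneg[OF nu] unfolding B_def by (intro mult_right_mono) auto
      finally show "\<bar>fa_integral \<Omega> \<nu> (f b)\<bar> \<le> B * tot_var M \<nu> \<Omega>" .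
    qed
    then have ev: "eventually (\<lambda>a. \<bar>fa_integral \<Omega> \<nu> (f a)\<bar> \<le> B * tot_var M \<nu> \<Omega>) (net_filter I le)"
      unfolding ev_net[OF d] using a0 by blast
    show ?thesis by (rule tendsto_upperbound[OF tendsto_rabs[OF lim] ev ntriv])
  qed
  show ?thesis
    unfolding norm_continuous_on_ba_def
  proof (intro ballI allI impI)
    fix \<mu> :: "'a set \<Rightarrow> real" and e :: real assume mu: "\<mu> \<in> ba \<Omega> M" and e: "0 < e"
    show "\<exists>\<delta>>0. \<forall>\<nu>\<in>ba \<Omega> M. ba_norm \<Omega> M (\<lambda>E. \<nu> E - \<mu> E) < \<delta> \<longrightarrow> \<bar>\<phi> \<nu> - \<phi> \<mu>\<bar> < e"
    proof (intro exI[of _ "e / (B + 1)"] conjI ballI impI)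
      show "0 < e / (B + 1)" using e B by simp
      fix \<nu> assume nu: "\<nu> \<in> ba \<Omega> M" and n: "ba_norm \<Omega> M (\<lambda>E. \<nu> E - \<mu> E) < e / (B + 1)"
      have db: "(\<lambda>E. \<nu> E - \<mu> E) \<in> ba \<Omega> M" by (rule ba_diff[OF nu mu])
      have "\<phi> (\<lambda>E. (\<nu> E - \<mu> E) + \<mu> E) = \<phi> (\<lambda>E. \<nu> E - \<mu> E) + \<phi> \<mu>"
        by (rule lin_add[OF lin db mu])
      then have eq: "\<phi> \<nu> - \<phi> \<mu> = \<phi> (\<lambda>E. \<nu> E - \<mu> E)" by simp
      have "\<bar>\<phi> \<nu> - \<phi> \<mu>\<bar> \<le> B * tot_var M (\<lambda>E. \<nu> E - \<mu> E) \<Omega>" unfolding eq by (rule bound[OF db])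
      also have "\<dots> \<le> B * (e / (B + 1))" using n B unfolding ba_norm_def by (intro mult_left_mono) auto
      also have "\<dots> < e"
      proof -
        have "B * (e / (B + 1)) = e * (B / (B + 1))" by simp
        also have "\<dots> < e * 1" using e B by (intro mult_strict_left_mono) auto
        finally show ?thesis by simp
      qed
      finally show "\<bar>\<phi> \<nu> - \<phi> \<mu>\<bar> < e" .
    qed
  qed
qed

end

theorem mainTheorem10:
  fixes \<Omega> :: "'a set" and A :: "'a set set" and \<phi> :: "('a set \<Rightarrow> real) \<Rightarrow> real"
  assumes "algebra \<Omega> A"
    and "linear_on_ba \<Omega> A \<phi>"
  shows "(norm_continuous_on_ba \<Omega> A \<phi> \<longrightarrow>
            (\<exists>(I :: (('a \<Rightarrow> real) \<times> ('a \<Rightarrow> real) set) set) le f. representing_net \<Omega> A \<phi> I le f))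
       \<and> (\<forall>(I :: 'i set) le f. representing_net \<Omega> A \<phi> I le f \<longrightarrow> norm_continuous_on_ba \<Omega> A \<phi>)"
proof (intro conjI impI allI)
  assume nc: "norm_continuous_on_ba \<Omega> A \<phi>"
  have "representing_net \<Omega> A \<phi> (jset \<Omega> A) jle (jf \<Omega> A \<phi> (functional_norm \<Omega> A \<phi>))"
    by (rule algebra.jnet[OF assms(1) assms(2) nc])
  then have "representing_net \<Omega> A \<phi> (enc ` jset \<Omega> A) (\<lambda>a b. jle (inv enc a) (inv enc b))
      (\<lambda>a. jf \<Omega> A \<phi> (functional_norm \<Omega> A \<phi>) (inv enc a))"
    by (rule transfer_net[OF enc_inj])
  then show "\<exists>(I :: (('a \<Rightarrow> real) \<times> ('a \<Rightarrow> real) set) set) le f. representing_net \<Omega> A \<phi> I le f"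
    by blast
next
  fix I :: "'i set" and le f
  assume "representing_net \<Omega> A \<phi> I le f"
  then show "norm_continuous_on_ba \<Omega> A \<phi>" by (rule algebra.rn_cont[OF assms(1) assms(2)])
qed


end
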